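(* Assume $W_c$ satisfies Assumption 2, let $r>0$, and suppose $rH^{W_s}(M)+H^{W_c}(X|Z)<R$. Then \[ \liminf_{n\to\infty}-\frac1n\log P_j(\lfloor rn\rfloor,n)\ge\sup_{s\in(0,\frac12]}\frac{sR-U[W_s,W_c,\uparrow;r](s)}{1-s}. \]
   Context: Setup. $\mathcal M$ finite, $W_s$ an irreducible aperiodic transition matrix on $\mathcal M$; message $M^k$ with law $P_{M_1}(m_1)\prod_{i=2}^kW_s(m_i|m_{i-1})$. $\mathcal X$ a finite abelian group, $\mathcal Z$ finite, $W_c=\{W_c(x,z|x',z')\}$ an irreducible aperiodic transition matrix on $\mathcal X\times\mathcal Z$; noise $(X^n,Z^n)$ with law $P_{X_1Z_1}(x_1,z_1)\prod_{i=2}^nW_c(x_i,z_i|x_{i-1},z_{i-1})$. Channel: input $\tilde x^n$ yields output $(x^n,z^n)$ with probability $P_{X^nZ^n}(x^n-\tilde x^n,z^n)$. $P_j(k,n)$ is the minimum over codes $(\mathsf e:\mathcal M^k\to\mathcal X^n,\ \mathsf d:(\mathcal X\times\mathcal Z)^n\to\mathcal M^k)$ of the average decoding error probability. $R:=\log|\mathcal X|$. Assumption 2: either (i) for every $\theta\in(-\infty,1)$ and $z,z'$, $\sum_xW_c(x,z|x',z')^{1-\theta}$ does not depend on $x'$, or (ii) $|\mathcal Z|=1$; in either case $W_{c,Z}(z|z'):=\sum_xW_c(x,z|x',z')$ is independent of $x'$. Entrywise powers $a^t$ of transition probabilities are $0$ when $a=0$; $\lambda(A)$ denotes the Perron–Frobenius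 eigenvalue. $\theta H^{W_s}_{1-\theta}(M):=\log\lambda\big(W_s(m|m')^{1-\theta}\big)$. For transition matrices $V$ on $\mathcal Z$ with $V(z|z')>0$ whenever $W_{c,Z}(z|z')>0$: $H^{W_c|V}_{1-\theta}(X|Z):=\frac1\theta\log\lambda\big(W_c(x,z|x',z')^{1-\theta}V(z|z')^\theta\big)$, $H^{W_c,\uparrow}_{1-\theta}(X|Z):=\max_VH^{W_c|V}_{1-\theta}(X|Z)$, $H^{W_c,\downarrow}_{1-\theta}(X|Z):=H^{W_c|W_{c,Z}}_{1-\theta}(X|Z)$. $H^{W_s}(M):=\lim_{\theta\to0}H^{W_s}_{1-\theta}(M)$, $H^{W_c}(X|Z):=\lim_{\theta\to0}H^{W_c,\downarrow}_{1-\theta}(X|Z)$. $U[W_s,W_c,\uparrow;r](\theta):=r\theta H^{W_s}_{1-\theta}(M)+\theta H^{W_c,\uparrow}_{1-\theta}(X|Z)$. *)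

theory Defs
  imports "HOL-Analysis.Analysis" "HOL-Library.Extended_Real" "HOL-Library.Liminf_Limsup"
begin

text \<open>Matrices on a finite index type are functions A i j (row i, column j).
  A transition matrix W(i|j) is written W i j: probability of going from j to i.\<close>

fun mpow :: "('a::finite \<Rightarrow> 'a \<Rightarrow> real) \<Rightarrow> nat \<Rightarrow> 'a \<Rightarrow> 'a \<Rightarrow> real" where
  "mpow A 0 = (\<lambda>i j. if i = j then 1 else 0)"
| "mpow A (Suc n) = (\<lambda>i j. \<Sum>k\<in>UNIV. A i k * mpow A n k j)"

definition transition_matrix :: "('a::finite \<Rightarrow> 'a \<Rightarrow> real) \<Rightarrow> bool" where
  "transition_matrix W \<longleftrightarrow> (\<forall>i j. 0 \<le> W i j) \<and> (\<forall>j. (\<Sum>i\<in>UNIV. W i j) = 1)"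

definition irreducible_mat :: "('a::finite \<Rightarrow> 'a \<Rightarrow> real) \<Rightarrow> bool" where
  "irreducible_mat A \<longleftrightarrow> (\<forall>i j. \<exists>n>0. mpow A n i j > 0)"

definition aperiodic_mat :: "('a::finite \<Rightarrow> 'a \<Rightarrow> real) \<Rightarrow> bool" where
  "aperiodic_mat A \<longleftrightarrow> (\<forall>i. Gcd {n::nat. n > 0 \<and> mpow A n i i > 0} = 1)"

definition prob_dist :: "('a::finite \<Rightarrow> real) \<Rightarrow> bool" where
  "prob_dist p \<longleftrightarrow> (\<forall>a. 0 \<le> p a) \<and> (\<Sum>a\<in>UNIV. p a) = 1"

definition is_eigenvalue :: "('a::finite \<Rightarrow> 'a \<Rightarrow> real) \<Rightarrow> complex \<Rightarrow> bool" where
  "is_eigenvalue A c \<longleftrightarrow>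
     (\<exists>v::'a \<Rightarrow> complex. v \<noteq> (\<lambda>_. 0) \<and> (\<forall>i. (\<Sum>j\<in>UNIV. complex_of_real (A i j) * v j) = c * v i))"

definition pf_eig :: "('a::finite \<Rightarrow> 'a \<Rightarrow> real) \<Rightarrow> real" where
  "pf_eig A = Sup {cmod c | c. is_eigenvalue A c}"

fun trans_prod :: "('a \<Rightarrow> 'a \<Rightarrow> real) \<Rightarrow> 'a \<Rightarrow> 'a list \<Rightarrow> real" where
  "trans_prod W prev [] = 1"
| "trans_prod W prev (y # ys) = W y prev * trans_prod W y ys"

fun chain_prob :: "('a \<Rightarrow> real) \<Rightarrow> ('a \<Rightarrow> 'a \<Rightarrow> real) \<Rightarrow> 'a list \<Rightarrow> real" where
  "chain_prob p W [] = 1"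
| "chain_prob p W (x # xs) = p x * trans_prod W x xs"

text \<open>Average error probability of the code (e,d): message length k, block length n.
  Output (x^n,z^n) given input xt^n has probability P_{X^nZ^n}(x^n - xt^n, z^n).\<close>

definition err_prob ::
  "('m::finite \<Rightarrow> real) \<Rightarrow> ('m \<Rightarrow> 'm \<Rightarrow> real) \<Rightarrow>
   (('x::{finite,ab_group_add} \<times> 'z::finite) \<Rightarrow> real) \<Rightarrow> ('x \<times> 'z \<Rightarrow> 'x \<times> 'z \<Rightarrow> real) \<Rightarrow>
   nat \<Rightarrow> nat \<Rightarrow> ('m list \<Rightarrow> 'x list) \<Rightarrow> (('x \<times> 'z) list \<Rightarrow> 'm list) \<Rightarrow> real" where
  "err_prob PM Ws PXZ Wc k n e d =
     (\<Sum>ms\<in>{ms::'m list. length ms = k}. chain_prob PM Ws ms *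
        (\<Sum>ys\<in>{ys::('x \<times> 'z) list. length ys = n}.
           chain_prob PXZ Wc (map2 (\<lambda>(x, z) xt. (x - xt, z)) ys (e ms)) *
           (if d ys \<noteq> ms then 1 else 0)))"

definition Pj ::
  "('m::finite \<Rightarrow> real) \<Rightarrow> ('m \<Rightarrow> 'm \<Rightarrow> real) \<Rightarrow>
   (('x::{finite,ab_group_add} \<times> 'z::finite) \<Rightarrow> real) \<Rightarrow> ('x \<times> 'z \<Rightarrow> 'x \<times> 'z \<Rightarrow> real) \<Rightarrow>
   nat \<Rightarrow> nat \<Rightarrow> real" where
  "Pj PM Ws PXZ Wc k n =
     Inf {err_prob PM Ws PXZ Wc k n e d | e d. \<forall>ms. length ms = k \<longrightarrow> length (e ms) = n}"

definition WcZ :: "('x::{finite,ab_group_add} \<times> 'z::finite \<Rightarrow> 'x \<times> 'z \<Rightarrow> real) \<Rightarrow> 'z \<Rightarrow> 'z \<Rightarrow> real" where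
  "WcZ Wc z z' = (\<Sum>x\<in>UNIV. Wc (x, z) (0, z'))"

definition assumption2 :: "('x::{finite,ab_group_add} \<times> 'z::finite \<Rightarrow> 'x \<times> 'z \<Rightarrow> real) \<Rightarrow> bool" where
  "assumption2 Wc \<longleftrightarrow>
     ((\<forall>\<theta>::real. \<theta> < 1 \<longrightarrow> (\<forall>z z' x1 x2.
         (\<Sum>x\<in>UNIV. Wc (x, z) (x1, z') powr (1 - \<theta>)) = (\<Sum>x\<in>UNIV. Wc (x, z) (x2, z') powr (1 - \<theta>))))
      \<or> CARD('z) = 1)"

text \<open>theta * H^{W_s}_{1-theta}(M) = log lambda(W_s^{1-theta}).\<close>
definition theta_H_src :: "('m::finite \<Rightarrow> 'm \<Rightarrow> real) \<Rightarrow> real \<Rightarrow> real" where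
  "theta_H_src Ws \<theta> = ln (pf_eig (\<lambda>m m'. Ws m m' powr (1 - \<theta>)))"

definition H_src :: "('m::finite \<Rightarrow> 'm \<Rightarrow> real) \<Rightarrow> real \<Rightarrow> real" where
  "H_src Ws \<theta> = theta_H_src Ws \<theta> / \<theta>"

definition H_src_rate :: "('m::finite \<Rightarrow> 'm \<Rightarrow> real) \<Rightarrow> real" where
  "H_src_rate Ws = Lim (at 0) (H_src Ws)"

definition H_cond_V ::
  "('x::{finite,ab_group_add} \<times> 'z::finite \<Rightarrow> 'x \<times> 'z \<Rightarrow> real) \<Rightarrow> ('z \<Rightarrow> 'z \<Rightarrow> real) \<Rightarrow> real \<Rightarrow> real" where
  "H_cond_V Wc V \<theta> =
     ln (pf_eig (\<lambda>(x, z) (x', z'). Wc (x, z) (x', z') powr (1 - \<theta>) * V z z' powr \<theta>)) / \<theta>"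

definition admissible_V :: "('x::{finite,ab_group_add} \<times> 'z::finite \<Rightarrow> 'x \<times> 'z \<Rightarrow> real) \<Rightarrow> ('z \<Rightarrow> 'z \<Rightarrow> real) \<Rightarrow> bool" where
  "admissible_V Wc V \<longleftrightarrow> transition_matrix V \<and> (\<forall>z z'. WcZ Wc z z' > 0 \<longrightarrow> V z z' > 0)"

definition H_cond_up :: "('x::{finite,ab_group_add} \<times> 'z::finite \<Rightarrow> 'x \<times> 'z \<Rightarrow> real) \<Rightarrow> real \<Rightarrow> real" where
  "H_cond_up Wc \<theta> = (SUP V\<in>{V. admissible_V Wc V}. H_cond_V Wc V \<theta>)"

definition H_cond_down :: "('x::{finite,ab_group_add} \<times> 'z::finite \<Rightarrow> 'x \<times> 'z \<Rightarrow> real) \<Rightarrow> real \<Rightarrow> real" where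
  "H_cond_down Wc \<theta> = H_cond_V Wc (WcZ Wc) \<theta>"

definition H_cond_rate :: "('x::{finite,ab_group_add} \<times> 'z::finite \<Rightarrow> 'x \<times> 'z \<Rightarrow> real) \<Rightarrow> real" where
  "H_cond_rate Wc = Lim (at 0) (H_cond_down Wc)"

definition U_up ::
  "('m::finite \<Rightarrow> 'm \<Rightarrow> real) \<Rightarrow> ('x::{finite,ab_group_add} \<times> 'z::finite \<Rightarrow> 'x \<times> 'z \<Rightarrow> real) \<Rightarrow> real \<Rightarrow> real \<Rightarrow> real" where
  "U_up Ws Wc r \<theta> = r * theta_H_src Ws \<theta> + \<theta> * H_cond_up Wc \<theta>"

end

theory Submission
  imports Defs
begin


lemma sum_ind_r: "(\<Sum>k\<in>(UNIV::'a::finite set). f k * (if k = j then 1 else 0)) = (f j :: real)"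
proof -
  have "(\<Sum>k\<in>(UNIV::'a set). f k * (if k = j then 1 else 0)) = (\<Sum>k\<in>UNIV. if k = j then f k else 0)"
    by (rule sum.cong) auto
  also have "\<dots> = f j" by simp
  finally show ?thesis .
qed
lemma sum_ind_l: "(\<Sum>k\<in>(UNIV::'a::finite set). (if i = k then 1 else 0) * f k) = (f i :: real)"
proof -
  have "(\<Sum>k\<in>(UNIV::'a set). (if i = k then 1 else 0) * f k) = (\<Sum>k\<in>UNIV. if i = k then f k else 0)"
    by (rule sum.cong) auto
  also have "\<dots> = f i" by simp
  finally show ?thesis .
qed

lemma mpow_nonneg: "(\<And>i j. 0 \<le> A i j) \<Longrightarrow> 0 \<le> mpow A n i j"
  by (induction n arbitrary: i j) (auto intro!: sum_nonneg mult_nonneg_nonneg)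

lemma sum_swap_mult: "(\<Sum>k\<in>(UNIV::'a::finite set). a k * (\<Sum>l\<in>(UNIV::'b::finite set). b k l * c l)) = (\<Sum>l\<in>UNIV. (\<Sum>k\<in>UNIV. a k * b k l) * (c l::real))"
proof -
  have "(\<Sum>k\<in>(UNIV::'a set). a k * (\<Sum>l\<in>(UNIV::'b set). b k l * c l)) = (\<Sum>k\<in>UNIV. \<Sum>l\<in>UNIV. a k * b k l * c l)"
    by (simp add: sum_distrib_left mult.assoc)
  also have "\<dots> = (\<Sum>l\<in>UNIV. \<Sum>k\<in>UNIV. a k * b k l * c l)" by (rule sum.swap)
  also have "\<dots> = (\<Sum>l\<in>UNIV. (\<Sum>k\<in>UNIV. a k * b k l) * c l)" by (simp add: sum_distrib_right)
  finally show ?thesis .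
qed

lemma mpow_Suc_right: "mpow A (Suc n) i j = (\<Sum>k\<in>UNIV. mpow A n i k * A k j)"
proof (induction n arbitrary: i j)
  case 0
  then show ?case by (simp add: sum_ind_r sum_ind_l)
next
  case (Suc n)
  have "mpow A (Suc (Suc n)) i j = (\<Sum>k\<in>UNIV. A i k * (\<Sum>l\<in>UNIV. mpow A n k l * A l j))"
    using Suc by (simp only: mpow.simps)
  also have "\<dots> = (\<Sum>l\<in>UNIV. (\<Sum>k\<in>UNIV. A i k * mpow A n k l) * A l j)"
    by (rule sum_swap_mult)
  also have "\<dots> = (\<Sum>l\<in>UNIV. mpow A (Suc n) i l * A l j)" by (simp only: mpow.simps)
  finally show ?case .
qed

lemma mpow_transpose: "mpow (\<lambda>i j. A j i) n i j = mpow A n j i"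
proof (induction n arbitrary: i j)
  case 0 then show ?case by auto
next
  case (Suc n)
  have "mpow (\<lambda>i j. A j i) (Suc n) i j = (\<Sum>k\<in>UNIV. A k i * mpow A n j k)"
    by (simp only: mpow.simps Suc)
  also have "\<dots> = mpow A (Suc n) j i" by (simp only: mpow_Suc_right mult.commute)
  finally show ?case .
qed

lemma irreducible_transpose: "irreducible_mat A \<Longrightarrow> irreducible_mat (\<lambda>i j. A j i)"
  unfolding irreducible_mat_def
proof (intro allI)
  fix i j
  assume "\<forall>i j. \<exists>n>0. 0 < mpow A n i j"
  then obtain n where "n > 0" "0 < mpow A n j i" by blast
  then show "\<exists>n>0. 0 < mpow (\<lambda>i j. A j i) n i j" using mpow_transpose[of A n i j] by auto
qed

lemma sum_pos_ex: "finite S \<Longrightarrow> (\<And>x. x \<in> S \<Longrightarrow> 0 \<le> (f x::real)) \<Longrightarrow> 0 < sum f S \<Longrightarrow> \<exists>x\<in>S. 0 < f x"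
proof (rule ccontr)
  assume "finite S" "\<And>x. x \<in> S \<Longrightarrow> 0 \<le> f x" "0 < sum f S" "\<not> (\<exists>x\<in>S. 0 < f x)"
  then have "\<forall>x\<in>S. f x \<le> 0" by (simp add: not_less)
  then have "sum f S \<le> 0" by (simp add: sum_nonpos)
  with \<open>0 < sum f S\<close> show False by simp
qed

lemma mpow_support_mono:
  assumes "\<And>i j. 0 \<le> A i j" "\<And>i j. 0 \<le> B i j" "\<And>i j. B i j > 0 \<Longrightarrow> A i j > 0"
  shows "mpow B n i j > 0 \<Longrightarrow> mpow A n i j > 0"
proof (induction n arbitrary: i j)
  case 0 then show ?case by (auto split: if_splits)
next
  case (Suc n)
  from Suc.prems have "\<exists>k\<in>UNIV. 0 < B i k * mpow B n k j"
    by (intro sum_pos_ex) (auto intro!: mult_nonneg_nonneg assms mpow_nonneg)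
  then obtain k where k0: "0 < B i k * mpow B n k j" by blast
  have "0 \<le> B i k" "0 \<le> mpow B n k j" using assms(2) mpow_nonneg[of B] by auto
  with k0 have k: "B i k > 0" "mpow B n k j > 0" by (auto simp: zero_less_mult_iff)
  have "0 < A i k * mpow A n k j" using k Suc.IH assms(3) by (simp only: mult_pos_pos)
  also have "\<dots> \<le> (\<Sum>k\<in>UNIV. A i k * mpow A n k j)"
    by (rule member_le_sum) (auto intro!: mult_nonneg_nonneg assms mpow_nonneg)
  finally show ?case by (simp only: mpow.simps)
qed

lemma irreducible_support:
  assumes "irreducible_mat B" "\<And>i j. 0 \<le> A i j" "\<And>i j. 0 \<le> B i j" "\<And>i j. B i j > 0 \<Longrightarrow> A i j > 0"
  shows "irreducible_mat A"
  unfolding irreducible_mat_def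
proof (intro allI)
  fix i j
  obtain n where "n > 0" "mpow B n i j > 0" using assms(1) unfolding irreducible_mat_def by blast
  then show "\<exists>n>0. 0 < mpow A n i j" using mpow_support_mono[of A B, OF assms(2-4)] by blast
qed

lemma mpow_eigen:
  assumes "\<And>i. (\<Sum>j\<in>UNIV. A i j * u j) = \<mu> * u i"
  shows "(\<Sum>j\<in>UNIV. mpow A m i j * u j) = \<mu> ^ m * u i"
proof (induction m arbitrary: i)
  case 0 then show ?case by (simp add: sum_ind_l)
next
  case (Suc m)
  have "(\<Sum>j\<in>UNIV. mpow A (Suc m) i j * u j) = (\<Sum>j\<in>UNIV. (\<Sum>k\<in>UNIV. A i k * mpow A m k j) * u j)"
    by (simp only: mpow.simps)
  also have "\<dots> = (\<Sum>k\<in>UNIV. A i k * (\<Sum>j\<in>UNIV. mpow A m k j * u j))"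
    by (rule sum_swap_mult[symmetric])
  also have "\<dots> = \<mu> ^ m * (\<Sum>k\<in>UNIV. A i k * u k)"
    by (simp add: Suc sum_distrib_left mult.assoc mult.left_commute)
  also have "\<dots> = \<mu> ^ Suc m * u i" using assms by simp
  finally show ?case .
qed


lemma irreducible_colpos:
  assumes nn: "\<And>i j. 0 \<le> A i j" and irr: "irreducible_mat (A::'a::finite \<Rightarrow> 'a \<Rightarrow> real)"
  shows "\<exists>k. A k j > 0"
proof -
  obtain n where n: "n > 0" "mpow A n j j > 0" using irr unfolding irreducible_mat_def by blast
  then obtain m where m: "n = Suc m" by (cases n) auto
  have "0 < (\<Sum>k\<in>UNIV. mpow A m j k * A k j)" using n m mpow_Suc_right[of A m j j] by simp
  then obtain k where "0 < mpow A m j k * A k j"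
    using sum_pos_ex[of UNIV "\<lambda>k. mpow A m j k * A k j"] mpow_nonneg[of A] nn by (auto intro: mult_nonneg_nonneg)
  moreover have "0 \<le> mpow A m j k" using mpow_nonneg[of A] nn by auto
  ultimately have "A k j > 0" using nn[of k j] by (auto simp: zero_less_mult_iff)
  then show ?thesis by blast
qed

lemma perron_right:
  fixes A :: "'a::finite \<Rightarrow> 'a \<Rightarrow> real"
  assumes nn: "\<And>i j. 0 \<le> A i j" and irr: "irreducible_mat A"
  shows "\<exists>\<mu>>0. \<exists>u. (\<forall>i. u i > 0) \<and> (\<forall>i. (\<Sum>j\<in>UNIV. A i j * u j) = \<mu> * u i)"
proof -
  define S :: "(real^'a) set" where "S = {v. (\<forall>i. 0 \<le> v$i) \<and> (\<Sum>i\<in>UNIV. v$i) = 1}"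
  define D where "D v = (\<Sum>i\<in>UNIV. \<Sum>j\<in>UNIV. A i j * v$j)" for v :: "real^'a"
  define f where "f v = (\<chi> i. (\<Sum>j\<in>UNIV. A i j * v$j) / D v)" for v :: "real^'a"
  have Dpos: "D v > 0" if "v \<in> S" for v
  proof -
    from that have vnn: "\<And>i. 0 \<le> v$i" and vs: "(\<Sum>i\<in>UNIV. v$i) = 1" by (auto simp: S_def)
    obtain j where vj: "v$j > 0" using sum_pos_ex[of UNIV "\<lambda>i. v$i"] vnn vs by auto
    obtain k where akj: "A k j > 0" using irreducible_colpos[OF nn irr] by blast
    have "0 < A k j * v$j" using vj akj by simp
    also have "\<dots> \<le> (\<Sum>j\<in>UNIV. A k j * v$j)"
      by (rule member_le_sum) (auto intro: mult_nonneg_nonneg nn vnn)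
    also have "\<dots> \<le> D v" unfolding D_def
      by (rule member_le_sum[of k UNIV "\<lambda>i. \<Sum>j\<in>UNIV. A i j * v$j"]) (auto intro!: sum_nonneg mult_nonneg_nonneg nn vnn)
    finally show ?thesis .
  qed
  have compS: "compact S"
  proof (subst compact_eq_bounded_closed, intro conjI)
    show "bounded S" unfolding bounded_iff
    proof (intro exI ballI)
      fix v assume "v \<in> S"
      then have "(\<Sum>i\<in>UNIV. \<bar>v$i\<bar>) = 1" by (auto simp: S_def)
      then show "norm v \<le> 1" using norm_le_l1_cart[of v] by simp
    qed
    have "S = {v. \<forall>i. 0 \<le> v$i} \<inter> {v. (\<Sum>i\<in>UNIV. v$i) = 1}" by (auto simp: S_def)
    also have "closed \<dots>"
      by (intro closed_Int closed_Collect_all closed_Collect_le closed_Collect_eq continuous_intros continuous_on_component)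
    finally show "closed S" .
  qed
  have convS: "convex S" unfolding convex_def S_def
  proof (intro ballI allI impI, safe)
    fix x y :: "real^'a" and u v :: real and i
    assume "\<forall>i. 0 \<le> x$i" "\<forall>i. 0 \<le> y$i" "0 \<le> u" "0 \<le> v"
    then show "0 \<le> (u *\<^sub>R x + v *\<^sub>R y) $ i" by simp
  next
    fix x y :: "real^'a" and u v :: real
    assume "(\<Sum>i\<in>UNIV. x$i) = 1" "(\<Sum>i\<in>UNIV. y$i) = 1" "u + v = 1"
    then show "(\<Sum>i\<in>UNIV. (u *\<^sub>R x + v *\<^sub>R y) $ i) = 1"
      by (simp add: sum.distrib sum_distrib_left[symmetric])
  qed
  have neS: "S \<noteq> {}"
  proof -
    have "(\<chi> i. 1 / real CARD('a)) \<in> S" by (simp add: S_def)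
    then show ?thesis by blast
  qed
  have contf: "continuous_on S f" unfolding f_def D_def
    by (intro continuous_on_vec_lambda continuous_on_divide continuous_intros continuous_on_component)
       (use Dpos in \<open>force simp: D_def\<close>)
  have fS: "f \<in> S \<rightarrow> S"
  proof
    fix v assume v: "v \<in> S"
    then have vnn: "\<And>i. 0 \<le> v$i" by (auto simp: S_def)
    have "0 \<le> (f v)$i" for i using Dpos[OF v] unfolding f_def
      by (auto intro!: divide_nonneg_pos sum_nonneg mult_nonneg_nonneg nn vnn)
    moreover have "(\<Sum>i\<in>UNIV. (f v)$i) = 1" using Dpos[OF v] unfolding f_def
      by (simp add: sum_divide_distrib[symmetric] D_def)
    ultimately show "f v \<in> S" by (auto simp: S_def)
  qed
  obtain v where v: "v \<in> S" "f v = v" using brouwer[OF compS convS neS contf fS] by blast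
  define u where "u i = v$i" for i
  define \<mu> where "\<mu> = D v"
  have mupos: "\<mu> > 0" using Dpos[OF v(1)] by (simp add: \<mu>_def)
  have eig: "(\<Sum>j\<in>UNIV. A i j * u j) = \<mu> * u i" for i
  proof -
    have "(f v)$i = v$i" using v(2) by simp
    then have "(\<Sum>j\<in>UNIV. A i j * v$j) / D v = v$i" unfolding f_def by simp
    then show ?thesis using mupos by (simp add: u_def \<mu>_def field_simps)
  qed
  have unn: "0 \<le> u i" for i using v(1) by (auto simp: S_def u_def)
  obtain j where uj: "u j > 0" using sum_pos_ex[of UNIV u] unn v(1) by (auto simp: S_def u_def)
  have upos: "u i > 0" for i
  proof -
    obtain n where n: "n > 0" "mpow A n i j > 0" using irr unfolding irreducible_mat_def by blast
    have "0 < mpow A n i j * u j" using n uj by simp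
    also have "\<dots> \<le> (\<Sum>k\<in>UNIV. mpow A n i k * u k)"
      by (rule member_le_sum) (auto intro!: mult_nonneg_nonneg mpow_nonneg nn unn)
    also have "\<dots> = \<mu> ^ n * u i" by (rule mpow_eigen[OF eig])
    finally have "0 < \<mu> ^ n * u i" .
    then show ?thesis using mupos by (simp add: zero_less_mult_iff)
  qed
  show ?thesis using mupos upos eig by blast
qed


lemma eig_bound:
  fixes A :: "'a::finite \<Rightarrow> 'a \<Rightarrow> real"
  assumes "is_eigenvalue A c"
  shows "cmod c \<le> (\<Sum>i\<in>UNIV. \<Sum>j\<in>UNIV. \<bar>A i j\<bar>)"
proof -
  obtain v where v: "v \<noteq> (\<lambda>_. 0)" "\<And>i. (\<Sum>j\<in>UNIV. complex_of_real (A i j) * v j) = c * v i"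
    using assms unfolding is_eigenvalue_def by blast
  define M where "M = Max (range (\<lambda>j. cmod (v j)))"
  have "M \<in> range (\<lambda>j. cmod (v j))" unfolding M_def by (rule Max_in) auto
  then obtain i where i: "cmod (v i) = M" by auto
  have Mge: "cmod (v j) \<le> M" for j unfolding M_def by (rule Max_ge) auto
  obtain j0 where "v j0 \<noteq> 0" using v(1) by auto
  then have Mpos: "M > 0" using Mge[of j0] by (meson less_le_trans zero_less_norm_iff)
  have "cmod c * M = cmod (c * v i)" using i by (simp add: norm_mult)
  also have "\<dots> = cmod (\<Sum>j\<in>UNIV. complex_of_real (A i j) * v j)" using v(2) by simp
  also have "\<dots> \<le> (\<Sum>j\<in>UNIV. cmod (complex_of_real (A i j) * v j))" by (rule norm_sum)
  also have "\<dots> \<le> (\<Sum>j\<in>UNIV. \<bar>A i j\<bar> * M)"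
    by (rule sum_mono) (simp add: norm_mult mult_left_mono Mge)
  also have "\<dots> = (\<Sum>j\<in>UNIV. \<bar>A i j\<bar>) * M" by (simp add: sum_distrib_right)
  also have "\<dots> \<le> (\<Sum>i\<in>UNIV. \<Sum>j\<in>UNIV. \<bar>A i j\<bar>) * M"
    by (intro mult_right_mono member_le_sum[of i UNIV "\<lambda>i. \<Sum>j\<in>UNIV. \<bar>A i j\<bar>"]) (auto intro: sum_nonneg less_imp_le[OF Mpos])
  finally show ?thesis using Mpos by simp
qed

lemma pf_eig_ge:
  fixes A :: "'a::finite \<Rightarrow> 'a \<Rightarrow> real"
  assumes "u k \<noteq> 0" "\<And>i. (\<Sum>j\<in>UNIV. A i j * u j) = \<mu> * u i" "\<mu> \<ge> 0"
  shows "\<mu> \<le> pf_eig A"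
proof -
  have "is_eigenvalue A (complex_of_real \<mu>)" unfolding is_eigenvalue_def
  proof (intro exI[of _ "\<lambda>j. complex_of_real (u j)"] conjI allI)
    show "(\<lambda>j. complex_of_real (u j)) \<noteq> (\<lambda>_. 0)" using assms(1) by (auto dest: fun_cong[of _ _ k])
    fix i
    have "(\<Sum>j\<in>UNIV. complex_of_real (A i j) * complex_of_real (u j)) = complex_of_real (\<Sum>j\<in>UNIV. A i j * u j)"
      by simp
    also have "\<dots> = complex_of_real \<mu> * complex_of_real (u i)" using assms(2) by simp
    finally show "(\<Sum>j\<in>UNIV. complex_of_real (A i j) * complex_of_real (u j)) = complex_of_real \<mu> * complex_of_real (u i)" .
  qed
  then have mem: "\<mu> \<in> {cmod c | c. is_eigenvalue A c}" using assms(3) by force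
  have bdd: "bdd_above {cmod c | c. is_eigenvalue A c}"
    using eig_bound[of A] unfolding bdd_above_def by blast
  show ?thesis unfolding pf_eig_def by (rule cSup_upper[OF mem bdd])
qed

lemma left_eig_le_pf:
  fixes A :: "'a::finite \<Rightarrow> 'a \<Rightarrow> real"
  assumes nn: "\<And>i j. 0 \<le> A i j" and irr: "irreducible_mat A"
    and wpos: "\<And>i. w i > 0" and weig: "\<And>j. (\<Sum>i\<in>UNIV. w i * A i j) = c * w j"
  shows "c \<le> pf_eig A"
proof -
  obtain \<nu> u where nu: "\<nu> > 0" "\<And>i. u i > 0" "\<And>i. (\<Sum>j\<in>UNIV. A i j * u j) = \<nu> * u i"
    using perron_right[OF nn irr] by blast
  have "(\<Sum>i\<in>UNIV. w i * (\<Sum>j\<in>UNIV. A i j * u j)) = (\<Sum>j\<in>UNIV. (\<Sum>i\<in>UNIV. w i * A i j) * u j)"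
    by (rule sum_swap_mult)
  then have "\<nu> * (\<Sum>i\<in>UNIV. w i * u i) = c * (\<Sum>j\<in>UNIV. w j * u j)"
    by (simp add: nu weig sum_distrib_left mult.assoc mult.left_commute)
  moreover have "(\<Sum>i\<in>UNIV. w i * u i) > 0"
    by (rule sum_pos) (auto intro: mult_pos_pos wpos nu(2))
  ultimately have "c = \<nu>" by simp
  then show ?thesis using pf_eig_ge[of u, OF _ nu(3)] nu(1) nu(2) by (metis less_irrefl less_imp_le)
qed

lemma perron_left:
  fixes A :: "'a::finite \<Rightarrow> 'a \<Rightarrow> real"
  assumes nn: "\<And>i j. 0 \<le> A i j" and irr: "irreducible_mat A"
  shows "\<exists>\<mu>>0. \<exists>w. (\<forall>i. w i > 0) \<and> (\<forall>j. (\<Sum>i\<in>UNIV. w i * A i j) = \<mu> * w j) \<and> \<mu> \<le> pf_eig A"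
proof -
  obtain \<mu> w where mw: "\<mu> > 0" "\<And>i. w i > 0" "\<And>i. (\<Sum>j\<in>UNIV. A j i * w j) = \<mu> * w i"
    using perron_right[of "\<lambda>i j. A j i", OF nn irreducible_transpose[OF irr]] by blast
  have le: "(\<Sum>i\<in>UNIV. w i * A i j) = \<mu> * w j" for j using mw(3)[of j] by (simp add: mult.commute)
  show ?thesis using mw left_eig_le_pf[OF nn irr mw(2) le] le by blast
qed


lemma finite_len: "finite {xs::'a::finite list. length xs = n}"
  using finite_lists_length_eq[of "UNIV::'a set" n] by simp

lemma len_Suc_eq: "{xs::'a list. length xs = Suc n} = (\<lambda>(x, xs). x # xs) ` (UNIV \<times> {xs. length xs = n})"
  by (auto simp: length_Suc_conv image_iff)

lemma sum_len_Suc: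
  "(\<Sum>xs\<in>{xs::'a::finite list. length xs = Suc n}. f xs) = (\<Sum>x\<in>UNIV. \<Sum>xs\<in>{xs. length xs = n}. f (x # xs))"
proof -
  have inj: "inj_on (\<lambda>(x, xs). x # xs) (UNIV \<times> {xs::'a list. length xs = n})" by (auto simp: inj_on_def)
  have "(\<Sum>xs\<in>{xs::'a list. length xs = Suc n}. f xs) = (\<Sum>p\<in>UNIV \<times> {xs::'a list. length xs = n}. f ((\<lambda>(x, xs). x # xs) p))"
    unfolding len_Suc_eq using sum.reindex[OF inj, of f] by (simp add: comp_def)
  also have "\<dots> = (\<Sum>x\<in>UNIV. \<Sum>xs\<in>{xs. length xs = n}. f (x # xs))"
    by (simp add: sum.cartesian_product split_def)
  finally show ?thesis .
qed

lemma len0: "{xs::'a list. length xs = 0} = {[]}" by auto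

lemma trans_prod_nonneg: "(\<And>a b. 0 \<le> W a b) \<Longrightarrow> 0 \<le> trans_prod W p xs"
  by (induction xs arbitrary: p) auto

lemma chain_prob_nonneg: "(\<And>a. 0 \<le> p a) \<Longrightarrow> (\<And>a b. 0 \<le> W a b) \<Longrightarrow> 0 \<le> chain_prob p W xs"
  by (cases xs) (auto intro!: mult_nonneg_nonneg trans_prod_nonneg)

lemma trans_prod_powr: "trans_prod W p xs powr t = trans_prod (\<lambda>a b. W a b powr t) p xs"
  by (induction xs arbitrary: p) (auto simp: powr_mult)

lemma chain_prob_powr: "chain_prob p W xs powr t = chain_prob (\<lambda>a. p a powr t) (\<lambda>a b. W a b powr t) xs"
  by (cases xs) (auto simp: powr_mult trans_prod_powr)

lemma trans_sum_bound:
  fixes A :: "'a::finite \<Rightarrow> 'a \<Rightarrow> real"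
  assumes nn: "\<And>a b. 0 \<le> A a b" and wc: "\<And>i. c \<le> w i" and cpos: "c > 0"
    and weig: "\<And>j. (\<Sum>i\<in>UNIV. w i * A i j) = \<mu> * w j" and mu: "\<mu> \<ge> 0"
  shows "(\<Sum>xs\<in>{xs. length xs = k}. trans_prod A p xs) \<le> \<mu> ^ k * w p / c"
proof (induction k arbitrary: p)
  case 0
  then show ?case using wc[of p] cpos by (simp add: len0)
next
  case (Suc k)
  have "(\<Sum>xs\<in>{xs. length xs = Suc k}. trans_prod A p xs) = (\<Sum>y\<in>UNIV. A y p * (\<Sum>xs\<in>{xs. length xs = k}. trans_prod A y xs))"
    by (simp add: sum_len_Suc sum_distrib_left)
  also have "\<dots> \<le> (\<Sum>y\<in>UNIV. A y p * (\<mu> ^ k * w y / c))"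
    by (intro sum_mono mult_left_mono Suc nn)
  also have "\<dots> = \<mu> ^ k / c * (\<Sum>y\<in>UNIV. w y * A y p)"
    by (simp add: sum_distrib_left mult_ac)
  also have "\<dots> = \<mu> ^ Suc k * w p / c" by (simp add: weig)
  finally show ?case .
qed

lemma chain_sum_bound:
  fixes A :: "'a::finite \<Rightarrow> 'a \<Rightarrow> real"
  assumes nn: "\<And>a b. 0 \<le> A a b" and pnn: "\<And>a. 0 \<le> p a" and wc: "\<And>i. c \<le> w i" and cpos: "c > 0"
    and weig: "\<And>j. (\<Sum>i\<in>UNIV. w i * A i j) = \<mu> * w j" and mu: "\<mu> \<ge> 0"
  shows "(\<Sum>xs\<in>{xs. length xs = Suc k}. chain_prob p A xs) \<le> \<mu> ^ k * ((\<Sum>x\<in>UNIV. p x * w x) / c)"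
proof -
  have "(\<Sum>xs\<in>{xs. length xs = Suc k}. chain_prob p A xs) = (\<Sum>x\<in>UNIV. p x * (\<Sum>xs\<in>{xs. length xs = k}. trans_prod A x xs))"
    by (simp add: sum_len_Suc sum_distrib_left)
  also have "\<dots> \<le> (\<Sum>x\<in>UNIV. p x * (\<mu> ^ k * w x / c))"
    by (intro sum_mono mult_left_mono trans_sum_bound[OF nn wc cpos weig mu] pnn)
  also have "\<dots> = \<mu> ^ k * ((\<Sum>x\<in>UNIV. p x * w x) / c)"
    by (simp add: sum_distrib_left sum_divide_distrib mult_ac)
  finally show ?thesis .
qed


lemma tangent_powr:
  fixes x c \<rho> :: real
  assumes "0 \<le> x" "0 < c" "0 \<le> \<rho>" "\<rho> \<le> 1"
  shows "x powr \<rho> \<le> \<rho> * c powr (\<rho> - 1) * x + (1 - \<rho>) * c powr \<rho>"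
proof (cases "x = 0")
  case True then show ?thesis using assms by simp
next
  case False
  then have xp: "x > 0" using assms by simp
  have y: "x powr \<rho> * c powr (1 - \<rho>) \<le> \<rho> * x + (1 - \<rho>) * c"
    by (rule Youngs_inequality_0) (use assms xp in auto)
  have cp: "c powr (1 - \<rho>) > 0" using assms by simp
  have e1: "c powr (\<rho> - 1) * c powr (1 - \<rho>) = 1"
  proof -
    have "c powr (\<rho> - 1) * c powr (1 - \<rho>) = c powr ((\<rho> - 1) + (1 - \<rho>))" by (rule powr_add[symmetric])
    then show ?thesis using assms by simp
  qed
  have e2: "c powr \<rho> * c powr (1 - \<rho>) = c"
  proof -
    have "c powr \<rho> * c powr (1 - \<rho>) = c powr (\<rho> + (1 - \<rho>))" by (rule powr_add[symmetric])
    then show ?thesis using assms by simp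
  qed
  have "(\<rho> * c powr (\<rho> - 1) * x + (1 - \<rho>) * c powr \<rho>) * c powr (1 - \<rho>) = \<rho> * x + (1 - \<rho>) * c"
  proof -
    have "(\<rho> * c powr (\<rho> - 1) * x + (1 - \<rho>) * c powr \<rho>) * c powr (1 - \<rho>)
        = \<rho> * x * (c powr (\<rho> - 1) * c powr (1 - \<rho>)) + (1 - \<rho>) * (c powr \<rho> * c powr (1 - \<rho>))"
      by algebra
    then show ?thesis by (simp only: e1 e2 mult_1_right)
  qed
  with y have "x powr \<rho> * c powr (1 - \<rho>) \<le> (\<rho> * c powr (\<rho> - 1) * x + (1 - \<rho>) * c powr \<rho>) * c powr (1 - \<rho>)"
    by simp
  then show ?thesis using cp by simp
qed

lemma sum_PiE_one:
  fixes F :: "'b \<Rightarrow> real"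
  assumes "finite A" "m \<in> A" "finite B"
  shows "(\<Sum>g\<in>PiE A (\<lambda>_. B). F (g m)) = real (card B) ^ (card A - 1) * (\<Sum>b\<in>B. F b)"
proof -
  define f where "f x y = (if x = m then F y else 1)" for x y
  have "(\<Prod>x\<in>A. \<Sum>y\<in>B. f x y) = (\<Sum>g\<in>PiE A (\<lambda>_. B). \<Prod>x\<in>A. f x (g x))"
    by (rule prod_sum_PiE) (use assms in auto)
  also have "(\<lambda>g. \<Prod>x\<in>A. f x (g x)) = (\<lambda>g. F (g m))"
    using assms by (auto simp: f_def prod.delta' intro!: ext)
  also have "(\<Prod>x\<in>A. \<Sum>y\<in>B. f x y) = (\<Sum>y\<in>B. f m y) * (\<Prod>x\<in>A - {m}. \<Sum>y\<in>B. f x y)"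
    using assms by (simp add: prod.remove)
  also have "(\<Prod>x\<in>A - {m}. \<Sum>y\<in>B. f x y) = (\<Prod>x\<in>A - {m}. real (card B))"
    by (rule prod.cong) (auto simp: f_def)
  also have "\<dots> = real (card B) ^ (card A - 1)" using assms by (simp add: card_Diff_singleton)
  finally show ?thesis by (simp add: f_def mult.commute)
qed

lemma sum_PiE_two:
  fixes F G :: "'b \<Rightarrow> real"
  assumes "finite A" "m \<in> A" "m' \<in> A" "m \<noteq> m'" "finite B"
  shows "(\<Sum>g\<in>PiE A (\<lambda>_. B). F (g m) * G (g m')) = real (card B) ^ (card A - 2) * (\<Sum>b\<in>B. F b) * (\<Sum>b\<in>B. G b)"
proof -
  define f where "f x y = (if x = m then F y else if x = m' then G y else 1)" for x y
  have "(\<Prod>x\<in>A. \<Sum>y\<in>B. f x y) = (\<Sum>g\<in>PiE A (\<lambda>_. B). \<Prod>x\<in>A. f x (g x))"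
    by (rule prod_sum_PiE) (use assms in auto)
  also have "(\<lambda>g. \<Prod>x\<in>A. f x (g x)) = (\<lambda>g. F (g m) * G (g m'))"
  proof
    fix g
    have "(\<Prod>x\<in>A. f x (g x)) = f m (g m) * (\<Prod>x\<in>A - {m}. f x (g x))" using assms by (simp add: prod.remove)
    also have "(\<Prod>x\<in>A - {m}. f x (g x)) = f m' (g m') * (\<Prod>x\<in>A - {m} - {m'}. f x (g x))"
      by (rule prod.remove) (use assms in auto)
    also have "(\<Prod>x\<in>A - {m} - {m'}. f x (g x)) = 1" by (rule prod.neutral) (auto simp: f_def)
    finally show "(\<Prod>x\<in>A. f x (g x)) = F (g m) * G (g m')" using assms by (simp add: f_def)
  qed
  also have "(\<Prod>x\<in>A. \<Sum>y\<in>B. f x y) = (\<Sum>y\<in>B. f m y) * ((\<Sum>y\<in>B. f m' y) * (\<Prod>x\<in>A - {m} - {m'}. \<Sum>y\<in>B. f x y))"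
  proof -
    have "(\<Prod>x\<in>A. \<Sum>y\<in>B. f x y) = (\<Sum>y\<in>B. f m y) * (\<Prod>x\<in>A - {m}. \<Sum>y\<in>B. f x y)"
      by (rule prod.remove) (use assms in auto)
    also have "(\<Prod>x\<in>A - {m}. \<Sum>y\<in>B. f x y) = (\<Sum>y\<in>B. f m' y) * (\<Prod>x\<in>A - {m} - {m'}. \<Sum>y\<in>B. f x y)"
      by (rule prod.remove) (use assms in auto)
    finally show ?thesis .
  qed
  also have "(\<Prod>x\<in>A - {m} - {m'}. \<Sum>y\<in>B. f x y) = (\<Prod>x\<in>A - {m} - {m'}. real (card B))"
    by (rule prod.cong) (auto simp: f_def)
  also have "\<dots> = real (card B) ^ (card A - 2)" using assms by (simp add: card_Diff_singleton numeral_2_eq_2)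
  finally show ?thesis using assms by (simp add: f_def mult_ac)
qed


lemma exists_max_on:
  fixes g :: "'a \<Rightarrow> real"
  assumes "finite Ms" "Ms \<noteq> {}"
  shows "\<exists>m. m \<in> Ms \<and> (\<forall>m'\<in>Ms. g m' \<le> g m)"
proof -
  have "Max (g ` Ms) \<in> g ` Ms" using assms by (intro Max_in) auto
  then obtain m where "m \<in> Ms" "g m = Max (g ` Ms)" by auto
  then show ?thesis using assms by (metis Max_ge finite_imageI image_eqI)
qed

lemma gallager_pointwise:
  fixes g :: "'a \<Rightarrow> real" and t \<rho> :: real
  assumes fin: "finite Ms" and gnn: "\<And>m. m \<in> Ms \<Longrightarrow> 0 \<le> g m"
    and m: "m \<in> Ms" and d: "d \<in> Ms" "\<forall>m'\<in>Ms. g m' \<le> g d"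
    and rho: "0 < \<rho>" and t: "t * (1 + \<rho>) = 1" "0 < t"
  shows "g m * (if d \<noteq> m then 1 else 0) \<le> g m powr t * (\<Sum>m'\<in>Ms - {m}. g m' powr t) powr \<rho>"
proof (cases "d \<noteq> m \<and> g m > 0")
  case False
  then show ?thesis using gnn[OF m] by (auto intro!: mult_nonneg_nonneg sum_nonneg)
next
  case True
  then have gp: "g m > 0" and dm: "d \<noteq> m" by auto
  have "g m powr t \<le> g d powr t" using d gp t m by (intro powr_mono2) auto
  also have "\<dots> \<le> (\<Sum>m'\<in>Ms - {m}. g m' powr t)"
    by (rule member_le_sum[of d "Ms - {m}" "\<lambda>m'. g m' powr t"]) (use d dm fin in auto)
  finally have le: "g m powr t \<le> (\<Sum>m'\<in>Ms - {m}. g m' powr t)" .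
  have "(g m powr t) powr \<rho> \<le> (\<Sum>m'\<in>Ms - {m}. g m' powr t) powr \<rho>"
    using le rho gp by (intro powr_mono2) auto
  then have "g m powr t * (g m powr t) powr \<rho> \<le> g m powr t * (\<Sum>m'\<in>Ms - {m}. g m' powr t) powr \<rho>"
    by (intro mult_left_mono) auto
  moreover have "g m powr t * (g m powr t) powr \<rho> = g m"
  proof -
    have "g m powr t * (g m powr t) powr \<rho> = g m powr (t + t * \<rho>)" using gp by (simp add: powr_powr powr_add)
    also have "t + t * \<rho> = 1" using t by (simp add: algebra_simps)
    finally show ?thesis using gp by simp
  qed
  ultimately show ?thesis using dm by simp
qed


lemma avg_term:
  fixes P :: "'m \<Rightarrow> real" and a :: "'c \<Rightarrow> real" and \<rho> :: real
  assumes fin: "finite Ms" and m: "m \<in> Ms" and finC: "finite C" and neC: "C \<noteq> {}"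
    and Pnn: "\<And>m. 0 \<le> P m" and ann: "\<And>c. 0 \<le> a c" and rho: "0 < \<rho>" "\<rho> \<le> 1"
  shows "(\<Sum>e\<in>PiE Ms (\<lambda>_. C). (P m * a (e m)) * (\<Sum>m'\<in>Ms - {m}. P m' * a (e m')) powr \<rho>)
    \<le> real (card C) ^ (card Ms - 1) * P m * (\<Sum>c\<in>C. a c) * ((\<Sum>m\<in>Ms. P m) * (\<Sum>c\<in>C. a c) / real (card C)) powr \<rho>"
proof -
  define E where "E = PiE Ms (\<lambda>_. C)"
  define N where "N = real (card C)"
  define A where "A = (\<Sum>c\<in>C. a c)"
  define S where "S = (\<Sum>m\<in>Ms. P m)"
  define Sm where "Sm = (\<Sum>m'\<in>Ms - {m}. P m')"
  define K where "K = card Ms"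
  define cy where "cy = Sm * A / N"
  have Npos: "N > 0" using finC neC by (simp add: N_def card_gt_0_iff)
  have Ann: "A \<ge> 0" unfolding A_def by (rule sum_nonneg) (use ann in auto)
  have Smnn: "Sm \<ge> 0" unfolding Sm_def by (rule sum_nonneg) (use Pnn in auto)
  have SmS: "Sm \<le> S" unfolding Sm_def S_def by (rule sum_mono2) (use fin Pnn in auto)
  have cynn: "cy \<ge> 0" using Npos Ann Smnn by (simp add: cy_def)
  have cyS: "cy \<le> S * A / N" unfolding cy_def using SmS Ann Npos by (intro divide_right_mono mult_right_mono) auto
  have aleA: "a c \<le> A" if "c \<in> C" for c unfolding A_def by (rule member_le_sum) (use that ann finC in auto)
  have finE: "finite E" unfolding E_def using fin finC by (intro finite_PiE) auto
  have RHSnn: "0 \<le> N ^ (K - 1) * P m * A * (S * A / N) powr \<rho>"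
    using Npos Ann Pnn by (intro mult_nonneg_nonneg) auto
  have main: "(\<Sum>e\<in>E. (P m * a (e m)) * (\<Sum>m'\<in>Ms - {m}. P m' * a (e m')) powr \<rho>) \<le> N ^ (K - 1) * P m * A * cy powr \<rho>"
  proof (cases "cy = 0")
    case True
    then have "Sm * A = 0" using Npos by (simp add: cy_def)
    then have zero: "(\<Sum>m'\<in>Ms - {m}. P m' * a (e m')) = 0" if "e \<in> E" for e
    proof (cases "Sm = 0")
      case True
      then have "\<forall>m'\<in>Ms - {m}. P m' = 0" unfolding Sm_def using fin Pnn by (subst (asm) sum_nonneg_eq_0_iff) auto
      then show ?thesis by simp
    next
      case False
      with \<open>Sm * A = 0\<close> have "A = 0" by simp
      then have "\<forall>c\<in>C. a c = 0" using aleA ann by (meson antisym)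
      moreover have "\<forall>m'\<in>Ms. e m' \<in> C" using that by (auto simp: E_def)
      ultimately show ?thesis by simp
    qed
    have "(\<Sum>e\<in>E. (P m * a (e m)) * (\<Sum>m'\<in>Ms - {m}. P m' * a (e m')) powr \<rho>) = 0"
      by (rule sum.neutral) (simp add: zero)
    then show ?thesis using True Npos Ann Pnn by simp
  next
    case False
    then have cyp: "cy > 0" using cynn by simp
    then have "Sm > 0" "A > 0" using Npos Smnn Ann by (auto simp: cy_def zero_less_mult_iff zero_less_divide_iff)
    then obtain m2 where m2: "m2 \<in> Ms - {m}" unfolding Sm_def by (metis all_not_in_conv less_irrefl sum.empty)
    have K2: "K \<ge> 2"
    proof -
      have "{m, m2} \<subseteq> Ms" using m m2 by auto
      then have "card {m, m2} \<le> K" unfolding K_def using fin by (intro card_mono)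
      then show ?thesis using m2 by (auto simp: card_insert_if split: if_splits)
    qed
    define c1 where "c1 = \<rho> * cy powr (\<rho> - 1)"
    define c0 where "c0 = (1 - \<rho>) * cy powr \<rho>"
    have step1: "(\<Sum>e\<in>E. (P m * a (e m)) * (\<Sum>m'\<in>Ms - {m}. P m' * a (e m')) powr \<rho>)
       \<le> (\<Sum>e\<in>E. (P m * a (e m)) * (c1 * (\<Sum>m'\<in>Ms - {m}. P m' * a (e m')) + c0))"
    proof (rule sum_mono)
      fix e assume "e \<in> E"
      have "(\<Sum>m'\<in>Ms - {m}. P m' * a (e m')) powr \<rho> \<le> c1 * (\<Sum>m'\<in>Ms - {m}. P m' * a (e m')) + c0"
        unfolding c1_def c0_def
        by (rule tangent_powr) (use cyp rho Pnn ann in \<open>auto intro!: sum_nonneg mult_nonneg_nonneg\<close>)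
      then show "(P m * a (e m)) * (\<Sum>m'\<in>Ms - {m}. P m' * a (e m')) powr \<rho>
          \<le> (P m * a (e m)) * (c1 * (\<Sum>m'\<in>Ms - {m}. P m' * a (e m')) + c0)"
        by (intro mult_left_mono) (use Pnn ann in auto)
    qed
    have step2: "(\<Sum>e\<in>E. (P m * a (e m)) * (c1 * (\<Sum>m'\<in>Ms - {m}. P m' * a (e m')) + c0))
       = c1 * P m * (\<Sum>m'\<in>Ms - {m}. P m' * (\<Sum>e\<in>E. a (e m) * a (e m'))) + c0 * P m * (\<Sum>e\<in>E. a (e m))"
    proof -
      have "(\<Sum>e\<in>E. (P m * a (e m)) * (c1 * (\<Sum>m'\<in>Ms - {m}. P m' * a (e m')) + c0))
        = (\<Sum>e\<in>E. (\<Sum>m'\<in>Ms - {m}. c1 * P m * (P m' * (a (e m) * a (e m')))) + c0 * P m * a (e m))"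
        by (rule sum.cong) (simp_all add: sum_distrib_left algebra_simps)
      also have "\<dots> = (\<Sum>e\<in>E. \<Sum>m'\<in>Ms - {m}. c1 * P m * (P m' * (a (e m) * a (e m')))) + (\<Sum>e\<in>E. c0 * P m * a (e m))"
        by (rule sum.distrib)
      also have "(\<Sum>e\<in>E. \<Sum>m'\<in>Ms - {m}. c1 * P m * (P m' * (a (e m) * a (e m'))))
          = (\<Sum>m'\<in>Ms - {m}. \<Sum>e\<in>E. c1 * P m * (P m' * (a (e m) * a (e m'))))" by (rule sum.swap)
      also have "\<dots> = c1 * P m * (\<Sum>m'\<in>Ms - {m}. P m' * (\<Sum>e\<in>E. a (e m) * a (e m')))"
        by (simp add: sum_distrib_left)
      also have "(\<Sum>e\<in>E. c0 * P m * a (e m)) = c0 * P m * (\<Sum>e\<in>E. a (e m))" by (simp add: sum_distrib_left)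
      finally show ?thesis .
    qed
    have s1: "(\<Sum>e\<in>E. a (e m)) = N ^ (K - 1) * A"
      unfolding E_def N_def A_def K_def by (rule sum_PiE_one) (use fin m finC in auto)
    have s2: "(\<Sum>e\<in>E. a (e m) * a (e m')) = N ^ (K - 2) * A * A" if "m' \<in> Ms - {m}" for m'
      unfolding E_def N_def A_def K_def by (rule sum_PiE_two) (use fin m finC that in auto)
    have "(\<Sum>m'\<in>Ms - {m}. P m' * (\<Sum>e\<in>E. a (e m) * a (e m'))) = Sm * (N ^ (K - 2) * A * A)"
      unfolding Sm_def by (simp add: s2 sum_distrib_right)
    also have "\<dots> = N ^ (K - 1) * A * cy"
    proof -
      have "N ^ (K - 1) = N ^ (K - 2) * N" using K2 by (metis Suc_diff_Suc Suc_1 Suc_le_eq diff_Suc_1 less_le_trans power_Suc2 one_less_numeral_iff semiring_norm(76) zero_less_Suc)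
      then show ?thesis using Npos by (simp add: cy_def field_simps)
    qed
    finally have s3: "(\<Sum>m'\<in>Ms - {m}. P m' * (\<Sum>e\<in>E. a (e m) * a (e m'))) = N ^ (K - 1) * A * cy" .
    have "c1 * cy = \<rho> * cy powr \<rho>"
    proof -
      have "cy powr (\<rho> - 1) * cy = cy powr (\<rho> - 1) * cy powr 1" using cyp by simp
      also have "\<dots> = cy powr ((\<rho> - 1) + 1)" by (rule powr_add[symmetric])
      also have "\<dots> = cy powr \<rho>" by simp
      finally show ?thesis by (simp add: c1_def mult.assoc)
    qed
    moreover have "c1 * P m * (N ^ (K - 1) * A * cy) = (c1 * cy) * (N ^ (K - 1) * P m * A)" by (simp add: mult_ac)
    ultimately have "c1 * P m * (N ^ (K - 1) * A * cy) + c0 * P m * (N ^ (K - 1) * A) = N ^ (K - 1) * P m * A * cy powr \<rho>"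
      unfolding c0_def by (simp add: algebra_simps)
    then show ?thesis using step1 step2 s1 s3 by simp
  qed
  also have "\<dots> \<le> N ^ (K - 1) * P m * A * (S * A / N) powr \<rho>"
    using cynn cyS rho Npos Ann Pnn by (intro mult_left_mono powr_mono2) auto
  finally show ?thesis unfolding E_def N_def A_def S_def K_def .
qed


lemma random_coding:
  fixes P :: "'m \<Rightarrow> real" and Q :: "'y \<Rightarrow> 'c \<Rightarrow> real" and \<rho> t :: real
  assumes fin: "finite Ms" and neMs: "Ms \<noteq> {}" and finC: "finite C" and neC: "C \<noteq> {}" and finY: "finite Y"
    and Pnn: "\<And>m. 0 \<le> P m" and Qnn: "\<And>y c. 0 \<le> Q y c" and rho: "0 < \<rho>" "\<rho> \<le> 1" and t: "t * (1 + \<rho>) = 1"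
  shows "\<exists>e d. (\<forall>m\<in>Ms. e m \<in> C) \<and>
    (\<Sum>m\<in>Ms. P m * (\<Sum>y\<in>Y. Q y (e m) * (if d y \<noteq> m then 1 else 0)))
      \<le> (\<Sum>m\<in>Ms. P m powr t) * (\<Sum>y\<in>Y. (\<Sum>c\<in>C. Q y c powr t) * ((\<Sum>m\<in>Ms. P m powr t) * (\<Sum>c\<in>C. Q y c powr t) / real (card C)) powr \<rho>) / real (card C)"
proof -
  define E where "E = PiE Ms (\<lambda>_. C)"
  define N where "N = real (card C)"
  define K where "K = card Ms"
  define S where "S = (\<Sum>m\<in>Ms. P m powr t)"
  define Ay where "Ay y = (\<Sum>c\<in>C. Q y c powr t)" for y
  define B where "B = S * (\<Sum>y\<in>Y. Ay y * (S * Ay y / N) powr \<rho>) / N"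
  define g where "g e y m = P m * Q y (e m)" for e :: "'m \<Rightarrow> 'c" and y m
  define dec where "dec e y = (SOME m. m \<in> Ms \<and> (\<forall>m'\<in>Ms. g e y m' \<le> g e y m))" for e y
  define err where "err e = (\<Sum>m\<in>Ms. P m * (\<Sum>y\<in>Y. Q y (e m) * (if dec e y \<noteq> m then 1 else 0)))" for e
  have tpos: "t > 0" using t rho by (smt (verit) mult_nonpos_nonneg)
  have Npos: "N > 0" using finC neC by (simp add: N_def card_gt_0_iff)
  have Kpos: "K > 0" using fin neMs by (simp add: K_def card_gt_0_iff)
  have finE: "finite E" unfolding E_def using fin finC by (intro finite_PiE) auto
  have neE: "E \<noteq> {}" unfolding E_def using neC by (simp add: PiE_eq_empty_iff)
  have cardE: "real (card E) = N ^ K" unfolding E_def N_def K_def using fin by (simp add: card_PiE)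
  have dec: "dec e y \<in> Ms \<and> (\<forall>m'\<in>Ms. g e y m' \<le> g e y (dec e y))" for e y
    unfolding dec_def by (rule someI_ex) (rule exists_max_on[OF fin neMs])
  have gt: "g e y m powr t = P m powr t * Q y (e m) powr t" for e y m
    unfolding g_def by (rule powr_mult)
  define T where "T e m y = (P m powr t * Q y (e m) powr t) * (\<Sum>m'\<in>Ms - {m}. P m' powr t * Q y (e m') powr t) powr \<rho>" for e m y
  have errle: "err e \<le> (\<Sum>m\<in>Ms. \<Sum>y\<in>Y. T e m y)" for e
    unfolding err_def
  proof (rule sum_mono)
    fix m assume m: "m \<in> Ms"
    have "P m * (\<Sum>y\<in>Y. Q y (e m) * (if dec e y \<noteq> m then 1 else 0)) = (\<Sum>y\<in>Y. g e y m * (if dec e y \<noteq> m then 1 else 0))"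
      by (simp add: g_def sum_distrib_left mult.assoc)
    also have "\<dots> \<le> (\<Sum>y\<in>Y. T e m y)"
    proof (rule sum_mono)
      fix y assume "y \<in> Y"
      have "g e y m * (if dec e y \<noteq> m then 1 else 0) \<le> g e y m powr t * (\<Sum>m'\<in>Ms - {m}. g e y m' powr t) powr \<rho>"
        by (rule gallager_pointwise[OF fin _ m]) (use dec rho t tpos Pnn Qnn in \<open>auto simp: g_def\<close>)
      then show "g e y m * (if dec e y \<noteq> m then 1 else 0) \<le> T e m y" by (simp add: T_def gt)
    qed
    finally show "P m * (\<Sum>y\<in>Y. Q y (e m) * (if dec e y \<noteq> m then 1 else 0)) \<le> (\<Sum>y\<in>Y. T e m y)" .
  qed
  have avg: "(\<Sum>e\<in>E. T e m y) \<le> N ^ (K - 1) * P m powr t * Ay y * (S * Ay y / N) powr \<rho>" if "m \<in> Ms" for m y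
    unfolding T_def E_def N_def K_def S_def Ay_def
    by (rule avg_term) (use fin that finC neC rho in auto)
  have "(\<Sum>e\<in>E. err e) \<le> (\<Sum>e\<in>E. \<Sum>m\<in>Ms. \<Sum>y\<in>Y. T e m y)" by (rule sum_mono) (rule errle)
  also have "\<dots> = (\<Sum>m\<in>Ms. \<Sum>y\<in>Y. \<Sum>e\<in>E. T e m y)"
    by (subst sum.swap) (simp add: sum.swap[of _ E Y])
  also have "\<dots> \<le> (\<Sum>m\<in>Ms. \<Sum>y\<in>Y. N ^ (K - 1) * P m powr t * Ay y * (S * Ay y / N) powr \<rho>)"
    by (intro sum_mono avg)
  also have "\<dots> = (\<Sum>m\<in>Ms. P m powr t * (N ^ (K - 1) * (\<Sum>y\<in>Y. Ay y * (S * Ay y / N) powr \<rho>)))"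
    by (rule sum.cong[OF refl]) (simp add: sum_distrib_left mult_ac)
  also have "\<dots> = S * (N ^ (K - 1) * (\<Sum>y\<in>Y. Ay y * (S * Ay y / N) powr \<rho>))"
    by (metis (no_types) S_def sum_distrib_right)
  also have "\<dots> = N ^ (K - 1) * S * (\<Sum>y\<in>Y. Ay y * (S * Ay y / N) powr \<rho>)"
    by (simp only: mult_ac)
  also have "\<dots> = real (card E) * B"
  proof -
    have "N ^ K = N ^ (K - 1) * N" using Kpos by (metis Suc_diff_1 power_Suc2)
    then show ?thesis using Npos by (simp add: cardE B_def)
  qed
  finally have sumle: "(\<Sum>e\<in>E. err e) \<le> real (card E) * B" .
  have "\<exists>e\<in>E. err e \<le> B"
  proof (rule ccontr)
    assume "\<not> (\<exists>e\<in>E. err e \<le> B)"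
    then have "\<forall>e\<in>E. B < err e" by auto
    then have "(\<Sum>e\<in>E. B) < (\<Sum>e\<in>E. err e)" using finE neE by (intro sum_strict_mono) auto
    then show False using sumle by simp
  qed
  then obtain e where e: "e \<in> E" "err e \<le> B" by blast
  have "\<forall>m\<in>Ms. e m \<in> C" using e(1) by (auto simp: E_def)
  then show ?thesis using e(2) unfolding err_def B_def S_def Ay_def N_def by blast
qed


lemma map2_shift:
  "length ys = length c \<Longrightarrow> map2 (\<lambda>(x, z) xt. (x - xt, z)) ys c = zip (map2 (-) (map fst ys) c) (map snd ys)"
  by (induction ys c rule: list_induct2) (auto split: prod.splits)

lemma map2_invol: "length x0 = length c \<Longrightarrow> map2 (-) x0 (map2 (-) x0 c) = (c::'x::ab_group_add list)"
  by (induction x0 c rule: list_induct2) auto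

lemma sum_shift:
  fixes F :: "'x::{finite,ab_group_add} list \<Rightarrow> real"
  assumes "length x0 = n"
  shows "(\<Sum>c\<in>{c. length c = n}. F (map2 (-) x0 c)) = (\<Sum>c\<in>{c. length c = n}. F c)"
  by (rule sum.reindex_bij_witness[of _ "\<lambda>c. map2 (-) x0 c" "\<lambda>c. map2 (-) x0 c"])
     (use assms in \<open>auto simp: map2_invol\<close>)

lemma sum_pairs:
  fixes G :: "'z::finite list \<Rightarrow> real"
  shows "(\<Sum>ys\<in>{ys::('x::finite \<times> 'z) list. length ys = n}. G (map snd ys))
    = real (card {xs::'x list. length xs = n}) * (\<Sum>zs\<in>{zs::'z list. length zs = n}. G zs)"
proof -
  have "(\<Sum>ys\<in>{ys::('x \<times> 'z) list. length ys = n}. G (map snd ys))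
     = (\<Sum>p\<in>{xs::'x list. length xs = n} \<times> {zs::'z list. length zs = n}. G (snd p))"
    by (rule sum.reindex_bij_witness[of _ "\<lambda>p. zip (fst p) (snd p)" "\<lambda>ys. (map fst ys, map snd ys)"])
       (auto simp: zip_map_fst_snd)
  also have "\<dots> = (\<Sum>xs\<in>{xs::'x list. length xs = n}. \<Sum>zs\<in>{zs::'z list. length zs = n}. G zs)"
    by (simp only: sum.cartesian_product split_def)
  also have "\<dots> = real (card {xs::'x list. length xs = n}) * (\<Sum>zs\<in>{zs::'z list. length zs = n}. G zs)"
    by simp
  finally show ?thesis .
qed


lemma err_prob_nonneg:
  assumes "\<And>a. 0 \<le> PM a" "\<And>a b. 0 \<le> Ws a b" "\<And>a. 0 \<le> PXZ a" "\<And>a b. 0 \<le> Wc a b"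
  shows "0 \<le> err_prob PM Ws PXZ Wc k n e d"
  unfolding err_prob_def using assms
  by (intro sum_nonneg mult_nonneg_nonneg chain_prob_nonneg) auto

lemma Pj_le:
  assumes "\<And>a. 0 \<le> PM a" "\<And>a b. 0 \<le> Ws a b" "\<And>a. 0 \<le> PXZ a" "\<And>a b. 0 \<le> Wc a b"
    and "\<forall>ms. length ms = k \<longrightarrow> length (e ms) = n"
  shows "Pj PM Ws PXZ Wc k n \<le> err_prob PM Ws PXZ Wc k n e d"
proof -
  have h: "\<And>e d. 0 \<le> err_prob PM Ws PXZ Wc k n e d" by (rule err_prob_nonneg[OF assms(1-4)])
  show ?thesis unfolding Pj_def
    by (rule cInf_lower) (use assms(5) h in \<open>auto simp: bdd_below_def intro!: exI[of _ 0]\<close>)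
qed

lemma Pj_nonneg:
  assumes "\<And>a. 0 \<le> PM a" "\<And>a b. 0 \<le> Ws a b" "\<And>a. 0 \<le> PXZ a" "\<And>a b. 0 \<le> Wc a b"
  shows "0 \<le> Pj PM Ws PXZ Wc k n"
  unfolding Pj_def
proof (rule cInf_greatest)
  show "{err_prob PM Ws PXZ Wc k n e d |e d. \<forall>ms. length ms = k \<longrightarrow> length (e ms) = n} \<noteq> {}"
    by (rule ex_in_conv[THEN iffD1], rule exI[of _ "err_prob PM Ws PXZ Wc k n (\<lambda>_. replicate n 0) (\<lambda>_. [])"]) auto
next
  have h: "\<And>e d. 0 \<le> err_prob PM Ws PXZ Wc k n e d" by (rule err_prob_nonneg[OF assms(1-4)])
  fix x assume "x \<in> {err_prob PM Ws PXZ Wc k n e d |e d. \<forall>ms. length ms = k \<longrightarrow> length (e ms) = n}"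
  then show "0 \<le> x" using h by auto
qed

lemma Pj_bound:
  fixes PM :: "'m::finite \<Rightarrow> real" and Ws :: "'m \<Rightarrow> 'm \<Rightarrow> real"
    and PXZ :: "'x::{finite,ab_group_add} \<times> 'z::finite \<Rightarrow> real"
    and Wc :: "'x \<times> 'z \<Rightarrow> 'x \<times> 'z \<Rightarrow> real" and \<rho> t :: real
  assumes nn: "\<And>a. 0 \<le> PM a" "\<And>a b. 0 \<le> Ws a b" "\<And>a. 0 \<le> PXZ a" "\<And>a b. 0 \<le> Wc a b"
    and rho: "0 < \<rho>" "\<rho> \<le> 1" and t: "t * (1 + \<rho>) = 1"
  shows "Pj PM Ws PXZ Wc k n \<le>
    (\<Sum>ms\<in>{ms::'m list. length ms = k}. chain_prob PM Ws ms powr t) *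
    (\<Sum>zs\<in>{zs::'z list. length zs = n}.
       (\<Sum>xs\<in>{xs::'x list. length xs = n}. chain_prob PXZ Wc (zip xs zs) powr t) *
       ((\<Sum>ms\<in>{ms::'m list. length ms = k}. chain_prob PM Ws ms powr t) *
        (\<Sum>xs\<in>{xs::'x list. length xs = n}. chain_prob PXZ Wc (zip xs zs) powr t)
        / real (card {xs::'x list. length xs = n})) powr \<rho>)"
proof -
  define Ms where "Ms = {ms::'m list. length ms = k}"
  define C where "C = {xs::'x list. length xs = n}"
  define Y where "Y = {ys::('x \<times> 'z) list. length ys = n}"
  define Q where "Q ys c = chain_prob PXZ Wc (map2 (\<lambda>(x, z) xt. (x - xt, z)) ys c)" for ys c
  define S where "S = (\<Sum>ms\<in>Ms. chain_prob PM Ws ms powr t)"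
  define Ach where "Ach zs = (\<Sum>xs\<in>C. chain_prob PXZ Wc (zip xs zs) powr t)" for zs
  define N where "N = real (card C)"
  have neMs: "Ms \<noteq> {}" unfolding Ms_def by (rule ex_in_conv[THEN iffD1]) (rule exI[of _ "replicate k undefined"], simp)
  have neC: "C \<noteq> {}" unfolding C_def by (rule ex_in_conv[THEN iffD1]) (rule exI[of _ "replicate n 0"], simp)
  obtain e d where ed: "\<forall>m\<in>Ms. e m \<in> C"
    "(\<Sum>m\<in>Ms. chain_prob PM Ws m * (\<Sum>y\<in>Y. Q y (e m) * (if d y \<noteq> m then 1 else 0)))
      \<le> (\<Sum>m\<in>Ms. chain_prob PM Ws m powr t) * (\<Sum>y\<in>Y. (\<Sum>c\<in>C. Q y c powr t) * ((\<Sum>m\<in>Ms. chain_prob PM Ws m powr t) * (\<Sum>c\<in>C. Q y c powr t) / real (card C)) powr \<rho>) / real (card C)"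
    using random_coding[of Ms C Y "chain_prob PM Ws" Q \<rho> t] neMs neC rho t
    unfolding Ms_def C_def Y_def
    by (auto simp: finite_len Q_def intro!: chain_prob_nonneg nn)
  have "Pj PM Ws PXZ Wc k n \<le> err_prob PM Ws PXZ Wc k n e d"
    by (rule Pj_le[OF nn]) (use ed(1) in \<open>auto simp: Ms_def C_def\<close>)
  also have "err_prob PM Ws PXZ Wc k n e d = (\<Sum>m\<in>Ms. chain_prob PM Ws m * (\<Sum>y\<in>Y. Q y (e m) * (if d y \<noteq> m then 1 else 0)))"
    unfolding err_prob_def Ms_def Y_def Q_def ..
  also have "\<dots> \<le> S * (\<Sum>y\<in>Y. (\<Sum>c\<in>C. Q y c powr t) * (S * (\<Sum>c\<in>C. Q y c powr t) / N) powr \<rho>) / N"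
    using ed(2) unfolding S_def N_def .
  also have "(\<Sum>y\<in>Y. (\<Sum>c\<in>C. Q y c powr t) * (S * (\<Sum>c\<in>C. Q y c powr t) / N) powr \<rho>)
      = (\<Sum>y\<in>Y. Ach (map snd y) * (S * Ach (map snd y) / N) powr \<rho>)"
  proof (rule sum.cong[OF refl])
    fix y assume "y \<in> Y"
    then have ly: "length y = n" by (simp add: Y_def)
    have "(\<Sum>c\<in>C. Q y c powr t) = (\<Sum>c\<in>C. chain_prob PXZ Wc (zip (map2 (-) (map fst y) c) (map snd y)) powr t)"
      unfolding Q_def C_def by (rule sum.cong[OF refl]) (simp add: map2_shift ly)
    also have "\<dots> = Ach (map snd y)"
      unfolding C_def Ach_def by (rule sum_shift[of _ n "\<lambda>c. chain_prob PXZ Wc (zip c (map snd y)) powr t"]) (simp add: ly)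
    finally show "(\<Sum>c\<in>C. Q y c powr t) * (S * (\<Sum>c\<in>C. Q y c powr t) / N) powr \<rho> = Ach (map snd y) * (S * Ach (map snd y) / N) powr \<rho>"
      by simp
  qed
  also have "\<dots> = N * (\<Sum>zs\<in>{zs::'z list. length zs = n}. Ach zs * (S * Ach zs / N) powr \<rho>)"
    unfolding Y_def N_def C_def by (rule sum_pairs)
  finally have "Pj PM Ws PXZ Wc k n \<le> S * (N * (\<Sum>zs\<in>{zs::'z list. length zs = n}. Ach zs * (S * Ach zs / N) powr \<rho>)) / N" .
  moreover have "N > 0" unfolding N_def using neC by (simp add: C_def finite_len card_gt_0_iff)
  ultimately show ?thesis unfolding S_def Ach_def N_def Ms_def C_def by simp
qed


definition MV :: "('x::{finite,ab_group_add} \<times> 'z::finite \<Rightarrow> 'x \<times> 'z \<Rightarrow> real) \<Rightarrow> ('z \<Rightarrow> 'z \<Rightarrow> real) \<Rightarrow> real \<Rightarrow> 'x \<times> 'z \<Rightarrow> 'x \<times> 'z \<Rightarrow> real" where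
  "MV Wc V \<theta> = (\<lambda>(x, z) (x', z'). Wc (x, z) (x', z') powr (1 - \<theta>) * V z z' powr \<theta>)"

lemma H_cond_V_MV: "H_cond_V Wc V \<theta> = ln (pf_eig (MV Wc V \<theta>)) / \<theta>"
  unfolding H_cond_V_def MV_def ..

lemma MV_apply: "MV Wc V \<theta> (x, z) (x', z') = Wc (x, z) (x', z') powr (1 - \<theta>) * V z z' powr \<theta>"
  unfolding MV_def by simp

lemma tm_nonneg: "transition_matrix W \<Longrightarrow> 0 \<le> W a b"
  unfolding transition_matrix_def by auto

lemma tm_le1: "transition_matrix (W::'a::finite \<Rightarrow> 'a \<Rightarrow> real) \<Longrightarrow> W a b \<le> 1"
proof -
  assume tm: "transition_matrix W"
  have "W a b \<le> (\<Sum>i\<in>UNIV. W i b)" by (rule member_le_sum) (use tm in \<open>auto simp: transition_matrix_def\<close>)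
  then show ?thesis using tm by (simp add: transition_matrix_def)
qed

lemma powr_le1: "0 \<le> x \<Longrightarrow> x \<le> 1 \<Longrightarrow> 0 \<le> a \<Longrightarrow> x powr a \<le> (1::real)"
  using powr_mono2[of a x 1] by simp

lemma sum_pair_UNIV: "(\<Sum>p\<in>(UNIV::('a::finite \<times> 'b::finite) set). f p) = (\<Sum>a\<in>UNIV. \<Sum>b\<in>UNIV. f (a, b))"
  by (simp add: sum.cartesian_product flip: UNIV_Times_UNIV)

lemma supp_WcZ:
  fixes Wc :: "'x::{finite,ab_group_add} \<times> 'z::finite \<Rightarrow> 'x \<times> 'z \<Rightarrow> real"
  assumes tm: "transition_matrix Wc" and a2: "assumption2 Wc" and pos: "Wc (x, z) (x', z') > 0"
  shows "WcZ Wc z z' > 0"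
  using a2 unfolding assumption2_def
proof
  assume h: "\<forall>\<theta>::real. \<theta> < 1 \<longrightarrow> (\<forall>z z' x1 x2.
         (\<Sum>x\<in>UNIV. Wc (x, z) (x1, z') powr (1 - \<theta>)) = (\<Sum>x\<in>UNIV. Wc (x, z) (x2, z') powr (1 - \<theta>)))"
  have "(\<Sum>x\<in>UNIV. Wc (x, z) (x', z') powr (1 - 0)) = (\<Sum>x\<in>UNIV. Wc (x, z) (0, z') powr (1 - 0))"
  proof -
    have "\<forall>z z' x1 x2. (\<Sum>x\<in>UNIV. Wc (x, z) (x1, z') powr (1 - 0)) = (\<Sum>x\<in>UNIV. Wc (x, z) (x2, z') powr (1 - 0))"
      using spec[OF h, of 0] by simp
    then show ?thesis by blast
  qed
  then have eq: "(\<Sum>x\<in>UNIV. Wc (x, z) (x', z')) = WcZ Wc z z'"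
    unfolding WcZ_def using tm_nonneg[OF tm] by (simp add: powr_one)
  have "Wc (x, z) (x', z') \<le> (\<Sum>x\<in>UNIV. Wc (x, z) (x', z'))"
    by (rule member_le_sum[of x UNIV "\<lambda>x. Wc (x, z) (x', z')"]) (auto intro: tm_nonneg[OF tm])
  then show ?thesis using pos eq by simp
next
  assume c: "CARD('z) = 1"
  then obtain z0 :: 'z where U: "UNIV = {z0}" using card_1_singletonE by blast
  have "1 = (\<Sum>p\<in>UNIV. Wc p (0, z'))" using tm unfolding transition_matrix_def by simp
  also have "\<dots> = (\<Sum>x\<in>UNIV. \<Sum>z''\<in>UNIV. Wc (x, z'') (0, z'))" by (rule sum_pair_UNIV)
  also have "\<dots> = WcZ Wc z z'"
  proof -
    have U': "(UNIV::'z set) = {z}" using U by (metis UNIV_I singletonD)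
    show ?thesis unfolding WcZ_def by (simp add: U')
  qed
  finally show ?thesis by simp
qed

lemma MV_nonneg: "0 \<le> MV Wc V \<theta> i j"
  unfolding MV_def by (cases i; cases j) auto

lemma MV_irred:
  fixes Wc :: "'x::{finite,ab_group_add} \<times> 'z::finite \<Rightarrow> 'x \<times> 'z \<Rightarrow> real"
  assumes tm: "transition_matrix Wc" and a2: "assumption2 Wc" and irr: "irreducible_mat Wc"
    and adm: "admissible_V Wc V"
  shows "irreducible_mat (MV Wc V \<theta>)"
proof (rule irreducible_support[OF irr MV_nonneg])
  show "\<And>i j. 0 \<le> Wc i j" using tm_nonneg[OF tm] by blast
  fix i j assume p: "0 < Wc i j"
  obtain x z where i: "i = (x, z)" by (cases i)
  obtain x' z' where j: "j = (x', z')" by (cases j)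
  have "WcZ Wc z z' > 0" using supp_WcZ[OF tm a2] p i j by simp
  then have "V z z' > 0" using adm unfolding admissible_V_def by blast
  then show "0 < MV Wc V \<theta> i j" using p i j by (simp add: MV_apply)
qed


lemma real_eig:
  fixes A :: "'a::finite \<Rightarrow> 'a \<Rightarrow> real"
  assumes "u k \<noteq> 0" "\<And>i. (\<Sum>j\<in>UNIV. A i j * u j) = \<mu> * u i"
  shows "is_eigenvalue A (complex_of_real \<mu>)"
  unfolding is_eigenvalue_def
proof (intro exI[of _ "\<lambda>j. complex_of_real (u j)"] conjI allI)
  show "(\<lambda>j. complex_of_real (u j)) \<noteq> (\<lambda>_. 0)" using assms(1) by (auto dest: fun_cong[of _ _ k])
  fix i
  have "(\<Sum>j\<in>UNIV. complex_of_real (A i j) * complex_of_real (u j)) = complex_of_real (\<Sum>j\<in>UNIV. A i j * u j)"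
    by simp
  also have "\<dots> = complex_of_real \<mu> * complex_of_real (u i)" using assms(2) by simp
  finally show "(\<Sum>j\<in>UNIV. complex_of_real (A i j) * complex_of_real (u j)) = complex_of_real \<mu> * complex_of_real (u i)" .
qed

lemma pf_eig_le_irr:
  fixes A :: "'a::finite \<Rightarrow> 'a \<Rightarrow> real"
  assumes nn: "\<And>i j. 0 \<le> A i j" and irr: "irreducible_mat A"
  shows "pf_eig A \<le> (\<Sum>i\<in>UNIV. \<Sum>j\<in>UNIV. \<bar>A i j\<bar>)" "pf_eig A > 0"
proof -
  obtain \<mu> u where mu: "\<mu> > 0" "\<And>i. u i > 0" "\<And>i. (\<Sum>j\<in>UNIV. A i j * u j) = \<mu> * u i"
    using perron_right[OF nn irr] by blast
  have ne: "{cmod c | c. is_eigenvalue A c} \<noteq> {}"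
  proof -
    have "u undefined \<noteq> 0" using mu(2)[of undefined] by simp
    then have "is_eigenvalue A (complex_of_real \<mu>)" by (rule real_eig) (rule mu(3))
    then show ?thesis by blast
  qed
  show "pf_eig A \<le> (\<Sum>i\<in>UNIV. \<Sum>j\<in>UNIV. \<bar>A i j\<bar>)"
    unfolding pf_eig_def by (rule cSup_least[OF ne]) (auto intro: eig_bound)
  have "u undefined \<noteq> 0" using mu(2)[of undefined] by simp
  then have "\<mu> \<le> pf_eig A" by (rule pf_eig_ge) (use mu in auto)
  then show "pf_eig A > 0" using mu by simp
qed

lemma MV_le1:
  assumes tm: "transition_matrix Wc" and tV: "transition_matrix V" and s: "0 \<le> s" "s \<le> 1"
  shows "MV Wc V s i j \<le> 1"
proof -
  obtain x z where i: "i = (x, z)" by (cases i)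
  obtain x' z' where j: "j = (x', z')" by (cases j)
  have "Wc (x, z) (x', z') powr (1 - s) \<le> 1" using tm_nonneg[OF tm] tm_le1[OF tm] s by (intro powr_le1) auto
  moreover have "V z z' powr s \<le> 1" using tm_nonneg[OF tV] tm_le1[OF tV] s by (intro powr_le1) auto
  ultimately show ?thesis unfolding i j MV_apply by (intro mult_le_one) auto
qed

lemma H_up_ge:
  fixes Wc :: "'x::{finite,ab_group_add} \<times> 'z::finite \<Rightarrow> 'x \<times> 'z \<Rightarrow> real"
  assumes tm: "transition_matrix Wc" and a2: "assumption2 Wc" and irr: "irreducible_mat Wc"
    and adm: "admissible_V Wc V0" and lam: "0 < lam0" "lam0 \<le> pf_eig (MV Wc V0 s)" and s: "0 < s" "s < 1"
  shows "ln lam0 \<le> s * H_cond_up Wc s"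
proof -
  define K where "K = real (CARD('x \<times> 'z)) * real (CARD('x \<times> 'z))"
  have bnd: "H_cond_V Wc V s \<le> ln K / s" if "admissible_V Wc V" for V
  proof -
    have irrV: "irreducible_mat (MV Wc V s)" by (rule MV_irred[OF tm a2 irr that])
    have p: "pf_eig (MV Wc V s) > 0" by (rule pf_eig_le_irr(2)[OF MV_nonneg irrV])
    have "pf_eig (MV Wc V s) \<le> (\<Sum>i\<in>UNIV. \<Sum>j\<in>UNIV. \<bar>MV Wc V s i j\<bar>)" by (rule pf_eig_le_irr(1)[OF MV_nonneg irrV])
    also have "\<dots> \<le> (\<Sum>i\<in>(UNIV::('x \<times> 'z) set). \<Sum>j\<in>(UNIV::('x \<times> 'z) set). 1)"
      using MV_le1[OF tm _ less_imp_le[OF s(1)] less_imp_le[OF s(2)]] that MV_nonneg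
      by (intro sum_mono) (auto simp: admissible_V_def abs_of_nonneg[OF MV_nonneg])
    also have "\<dots> = K" by (simp add: K_def)
    finally have "ln (pf_eig (MV Wc V s)) \<le> ln K" using p by simp
    then show ?thesis unfolding H_cond_V_MV using s by (simp add: divide_right_mono)
  qed
  have bdd: "bdd_above ((\<lambda>V. H_cond_V Wc V s) ` {V. admissible_V Wc V})"
    using bnd unfolding bdd_above_def by blast
  have "H_cond_V Wc V0 s \<le> H_cond_up Wc s"
    unfolding H_cond_up_def by (rule cSUP_upper) (use adm bdd in auto)
  moreover have "ln lam0 \<le> s * H_cond_V Wc V0 s" unfolding H_cond_V_MV using lam s by simp
  ultimately show ?thesis using s by (smt (verit) mult_left_mono)
qed


lemma sum_zip:
  fixes F :: "('x::finite \<times> 'z::finite) list \<Rightarrow> real"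
  shows "(\<Sum>zs\<in>{zs::'z list. length zs = n}. \<Sum>xs\<in>{xs::'x list. length xs = n}. F (zip xs zs))
    = (\<Sum>ys\<in>{ys::('x \<times> 'z) list. length ys = n}. F ys)"
proof -
  have "(\<Sum>zs\<in>{zs::'z list. length zs = n}. \<Sum>xs\<in>{xs::'x list. length xs = n}. F (zip xs zs))
     = (\<Sum>xs\<in>{xs::'x list. length xs = n}. \<Sum>zs\<in>{zs::'z list. length zs = n}. F (zip xs zs))"
    by (rule sum.swap)
  also have "\<dots> = (\<Sum>p\<in>{xs::'x list. length xs = n} \<times> {zs::'z list. length zs = n}. F (zip (fst p) (snd p)))"
    by (simp only: sum.cartesian_product split_def)
  also have "\<dots> = (\<Sum>ys\<in>{ys::('x \<times> 'z) list. length ys = n}. F ys)"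
    by (rule sum.reindex_bij_witness[of _ "\<lambda>ys. (map fst ys, map snd ys)" "\<lambda>p. zip (fst p) (snd p)"])
       (auto simp: zip_map_fst_snd)
  finally show ?thesis .
qed

lemma sum_powr_le:
  fixes f :: "'a \<Rightarrow> real"
  assumes fin: "finite A" and nn: "\<And>a. 0 \<le> f a" and p: "1 \<le> p"
  shows "(\<Sum>a\<in>A. f a powr p) \<le> (\<Sum>a\<in>A. f a) powr p"
proof -
  define S where "S = (\<Sum>a\<in>A. f a)"
  have fS: "f a \<le> S" if "a \<in> A" for a unfolding S_def by (rule member_le_sum) (use fin nn that in auto)
  have Snn: "0 \<le> S" unfolding S_def by (rule sum_nonneg) (use nn in auto)
  have "(\<Sum>a\<in>A. f a powr p) = (\<Sum>a\<in>A. f a * f a powr (p - 1))"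
    by (rule sum.cong[OF refl]) (use nn in \<open>simp add: powr_mult_base\<close>)
  also have "\<dots> \<le> (\<Sum>a\<in>A. f a * S powr (p - 1))"
    by (rule sum_mono) (use nn fS p in \<open>auto intro!: mult_left_mono powr_mono2\<close>)
  also have "\<dots> = S * S powr (p - 1)" by (simp add: S_def sum_distrib_right)
  also have "\<dots> = S powr p" using Snn by (simp add: powr_mult_base)
  finally show ?thesis unfolding S_def .
qed

lemma pow_powr: "0 < (x::real) \<Longrightarrow> (x ^ n) powr p = (x powr p) ^ n"
  by (induction n) (auto simp: powr_mult)

lemma min_pos:
  fixes w :: "'a::finite \<Rightarrow> real"
  assumes "\<And>i. w i > 0"
  shows "\<exists>c>0. \<forall>i. c \<le> w i"
proof -
  have "Min (range w) \<in> range w" by (rule Min_in) auto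
  then have "Min (range w) > 0" using assms by auto
  moreover have "\<forall>i. Min (range w) \<le> w i" by auto
  ultimately show ?thesis by blast
qed


lemma tm_irr_powr:
  assumes "transition_matrix W" "irreducible_mat W" "0 < t"
  shows "irreducible_mat (\<lambda>a b. W a b powr t)"
  by (rule irreducible_support[OF assms(2)]) (use tm_nonneg[OF assms(1)] assms(3) in auto)

lemma chan_ii:
  fixes PXZ :: "'x::{finite,ab_group_add} \<times> 'z::finite \<Rightarrow> real"
    and Wc :: "'x \<times> 'z \<Rightarrow> 'x \<times> 'z \<Rightarrow> real"
  assumes pd: "prob_dist PXZ" and tm: "transition_matrix Wc" and irr: "irreducible_mat Wc"
    and a2: "assumption2 Wc" and cz: "CARD('z) = 1" and s: "0 < s" "s \<le> 1/2"
  shows "\<exists>C2>0. \<exists>\<mu>2>0. (1 - s) * ln \<mu>2 \<le> s * H_cond_up Wc s \<and>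
    (\<forall>n\<ge>1. (\<Sum>zs\<in>{zs::'z list. length zs = n}. (\<Sum>xs\<in>{xs::'x list. length xs = n}. chain_prob PXZ Wc (zip xs zs) powr (1 - s)) powr (1 + s / (1 - s))) \<le> C2 * \<mu>2 ^ n)"
proof -
  define t where "t = 1 - s"
  define p where "p = 1 + s / (1 - s)"
  have tpos: "t > 0" using s by (simp add: t_def)
  have p1: "p \<ge> 1" using s by (simp add: p_def)
  have tp: "t * p = 1" using s by (simp add: t_def p_def field_simps)
  define Wt where "Wt a b = Wc a b powr t" for a b
  define Pt where "Pt a = PXZ a powr t" for a
  have Wtnn: "0 \<le> Wt a b" for a b by (simp add: Wt_def)
  have Ptnn: "0 \<le> Pt a" for a by (simp add: Pt_def)
  have irrt: "irreducible_mat Wt" unfolding Wt_def by (rule tm_irr_powr[OF tm irr tpos])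
  obtain \<mu> w where mw: "\<mu> > 0" "\<And>i. w i > 0" "\<And>j. (\<Sum>i\<in>UNIV. w i * Wt i j) = \<mu> * w j" "\<mu> \<le> pf_eig Wt"
    using perron_left[OF Wtnn irrt] by blast
  obtain c where c: "c > 0" "\<And>i. c \<le> w i" using min_pos[of w] mw(2) by blast
  define D where "D = (\<Sum>x\<in>UNIV. Pt x * w x) / c"
  have Dnn: "D \<ge> 0" unfolding D_def using c Ptnn mw(2) by (intro divide_nonneg_pos sum_nonneg mult_nonneg_nonneg) (auto intro: less_imp_le)
  define C2 where "C2 = ((D + 1) / \<mu>) powr p"
  define \<mu>2 where "\<mu>2 = \<mu> powr p"
  have C2pos: "C2 > 0" unfolding C2_def using Dnn mw(1) by simp
  have mu2pos: "\<mu>2 > 0" unfolding \<mu>2_def using mw(1) by simp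
  have bound: "(\<Sum>zs\<in>{zs::'z list. length zs = n}. (\<Sum>xs\<in>{xs::'x list. length xs = n}. chain_prob PXZ Wc (zip xs zs) powr (1 - s)) powr p) \<le> C2 * \<mu>2 ^ n"
    if n: "n \<ge> 1" for n
  proof -
    obtain n' where n': "n = Suc n'" using n by (cases n) auto
    define F where "F = (\<Sum>zs\<in>{zs::'z list. length zs = n}. (\<Sum>xs\<in>{xs::'x list. length xs = n}. chain_prob PXZ Wc (zip xs zs) powr (1 - s)))"
    have Fnn: "F \<ge> 0" unfolding F_def by (intro sum_nonneg) auto
    have "F = (\<Sum>ys\<in>{ys::('x \<times> 'z) list. length ys = n}. chain_prob Pt Wt ys)"
      unfolding F_def by (subst sum_zip) (simp add: chain_prob_powr Pt_def[abs_def] Wt_def[abs_def] t_def)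
    also have "\<dots> \<le> \<mu> ^ n' * D" unfolding n' D_def
      by (rule chain_sum_bound[OF Wtnn Ptnn c(2) c(1) mw(3)]) (use mw(1) in simp)
    also have "\<dots> \<le> \<mu> ^ n' * (D + 1)" using mw(1) by simp
    finally have Fle: "F \<le> \<mu> ^ n' * (D + 1)" .
    have "(\<Sum>zs\<in>{zs::'z list. length zs = n}. (\<Sum>xs\<in>{xs::'x list. length xs = n}. chain_prob PXZ Wc (zip xs zs) powr (1 - s)) powr p)
        \<le> F powr p" unfolding F_def
      by (rule sum_powr_le) (auto simp: finite_len p1 intro!: sum_nonneg)
    also have "\<dots> \<le> (\<mu> ^ n' * (D + 1)) powr p" using Fle Fnn p1 by (intro powr_mono2) auto
    also have "(\<mu> ^ n' * (D + 1)) powr p = C2 * \<mu>2 ^ n"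
    proof -
      have "(\<mu> ^ n' * (D + 1)) powr p = (\<mu> powr p) ^ n' * (D + 1) powr p"
        using mw(1) by (simp add: powr_mult pow_powr)
      also have "(D + 1) powr p = C2 * \<mu> powr p" unfolding C2_def using mw(1) Dnn
        by (simp add: powr_divide)
      finally show ?thesis unfolding \<mu>2_def n' by simp
    qed
    finally show ?thesis .
  qed
  have V0: "admissible_V Wc (\<lambda>_ _. 1)"
    unfolding admissible_V_def transition_matrix_def using cz by simp
  have MV0: "MV Wc (\<lambda>_ _. 1) s = Wt"
    by (rule ext, rule ext) (auto simp: MV_def Wt_def t_def split: prod.splits)
  have "ln \<mu> \<le> s * H_cond_up Wc s"
    by (rule H_up_ge[OF tm a2 irr V0 mw(1)]) (use mw(4) MV0 s in auto)
  moreover have "(1 - s) * ln \<mu>2 = ln \<mu>" unfolding \<mu>2_def using mw(1) tp by (simp add: ln_powr t_def)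
  ultimately have "(1 - s) * ln \<mu>2 \<le> s * H_cond_up Wc s" by simp
  then show ?thesis using C2pos mu2pos bound unfolding p_def by blast
qed


lemma lump_trans:
  fixes Wt :: "'x::finite \<times> 'z \<Rightarrow> 'x \<times> 'z \<Rightarrow> real"
  assumes lump: "\<And>z z' x1. (\<Sum>x\<in>UNIV. Wt (x, z) (x1, z')) = g z z'"
  shows "length zs = m \<Longrightarrow> (\<Sum>xs\<in>{xs::'x list. length xs = m}. trans_prod Wt (x0, z0) (zip xs zs)) = trans_prod g z0 zs"
proof (induction zs arbitrary: m x0 z0)
  case Nil
  then show ?case by (simp add: len0)
next
  case (Cons z zs)
  then obtain m' where m: "m = Suc m'" "length zs = m'" by auto
  have "(\<Sum>xs\<in>{xs::'x list. length xs = m}. trans_prod Wt (x0, z0) (zip xs (z # zs)))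
      = (\<Sum>x\<in>UNIV. \<Sum>xs\<in>{xs::'x list. length xs = m'}. Wt (x, z) (x0, z0) * trans_prod Wt (x, z) (zip xs zs))"
    unfolding m by (simp add: sum_len_Suc)
  also have "\<dots> = (\<Sum>x\<in>UNIV. Wt (x, z) (x0, z0) * trans_prod g z zs)"
    by (simp add: sum_distrib_left[symmetric] Cons.IH[OF m(2)])
  also have "\<dots> = g z z0 * trans_prod g z zs" by (simp add: sum_distrib_right[symmetric] lump)
  finally show ?case by simp
qed

lemma lump_chain:
  fixes Wt :: "'x::finite \<times> 'z \<Rightarrow> 'x \<times> 'z \<Rightarrow> real"
  assumes lump: "\<And>z z' x1. (\<Sum>x\<in>UNIV. Wt (x, z) (x1, z')) = g z z'"
  shows "length zs = Suc m \<Longrightarrow> (\<Sum>xs\<in>{xs::'x list. length xs = Suc m}. chain_prob Pt Wt (zip xs zs)) = chain_prob (\<lambda>z. \<Sum>x\<in>UNIV. Pt (x, z)) g zs"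
proof -
  assume l: "length zs = Suc m"
  then obtain z zs' where zs: "zs = z # zs'" "length zs' = m" by (cases zs) auto
  have "(\<Sum>xs\<in>{xs::'x list. length xs = Suc m}. chain_prob Pt Wt (zip xs zs))
      = (\<Sum>x\<in>UNIV. Pt (x, z) * (\<Sum>xs\<in>{xs::'x list. length xs = m}. trans_prod Wt (x, z) (zip xs zs')))"
    unfolding zs by (simp add: sum_len_Suc sum_distrib_left)
  also have "\<dots> = (\<Sum>x\<in>UNIV. Pt (x, z)) * trans_prod g z zs'"
    by (simp add: lump_trans[of Wt g, OF lump zs(2)] sum_distrib_right)
  finally show ?thesis unfolding zs by simp
qed

lemma proj_irred:
  fixes W :: "'x::finite \<times> 'z::finite \<Rightarrow> 'x \<times> 'z \<Rightarrow> real" and B :: "'z \<Rightarrow> 'z \<Rightarrow> real"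
  assumes irr: "irreducible_mat W" and Wnn: "\<And>i j. 0 \<le> W i j" and Bnn: "\<And>a b. 0 \<le> B a b"
    and supp: "\<And>x z x' z'. W (x, z) (x', z') > 0 \<Longrightarrow> B z z' > 0"
  shows "irreducible_mat B"
proof -
  have key: "mpow W n (x, z) (x', z') > 0 \<Longrightarrow> mpow B n z z' > 0" for n x z x' z'
  proof (induction n arbitrary: x z)
    case 0 then show ?case by (simp split: if_splits)
  next
    case (Suc n)
    from Suc.prems have "\<exists>k\<in>UNIV. 0 < W (x, z) k * mpow W n k (x', z')"
      by (intro sum_pos_ex) (auto intro!: mult_nonneg_nonneg Wnn mpow_nonneg)
    then obtain k where k0: "0 < W (x, z) k * mpow W n k (x', z')" by blast
    obtain x'' z'' where kk: "k = (x'', z'')" by (cases k)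
    have "0 \<le> W (x, z) k" "0 \<le> mpow W n k (x', z')" using Wnn mpow_nonneg[of W] by auto
    with k0 have "W (x, z) (x'', z'') > 0" "mpow W n (x'', z'') (x', z') > 0" by (auto simp: zero_less_mult_iff kk)
    then have "B z z'' > 0" "mpow B n z'' z' > 0" using supp Suc.IH by auto
    then have "0 < B z z'' * mpow B n z'' z'" by simp
    also have "\<dots> \<le> (\<Sum>k\<in>UNIV. B z k * mpow B n k z')"
      by (rule member_le_sum) (auto intro!: mult_nonneg_nonneg Bnn mpow_nonneg)
    finally show ?case by (simp only: mpow.simps)
  qed
  show ?thesis unfolding irreducible_mat_def
  proof (intro allI)
    fix z z' :: 'z
    obtain n where "n > 0" "mpow W n (undefined, z) (undefined, z') > 0" using irr unfolding irreducible_mat_def by blast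
    then show "\<exists>n>0. 0 < mpow B n z z'" using key by blast
  qed
qed


lemma chan_i:
  fixes PXZ :: "'x::{finite,ab_group_add} \<times> 'z::finite \<Rightarrow> real"
    and Wc :: "'x \<times> 'z \<Rightarrow> 'x \<times> 'z \<Rightarrow> real"
  assumes pd: "prob_dist PXZ" and tm: "transition_matrix Wc" and irr: "irreducible_mat Wc"
    and a2: "assumption2 Wc"
    and h: "\<forall>\<theta>::real. \<theta> < 1 \<longrightarrow> (\<forall>z z' x1 x2.
         (\<Sum>x\<in>UNIV. Wc (x, z) (x1, z') powr (1 - \<theta>)) = (\<Sum>x\<in>UNIV. Wc (x, z) (x2, z') powr (1 - \<theta>)))"
    and s: "0 < s" "s \<le> 1/2"
  shows "\<exists>C2>0. \<exists>\<mu>2>0. (1 - s) * ln \<mu>2 \<le> s * H_cond_up Wc s \<and>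
    (\<forall>n\<ge>1. (\<Sum>zs\<in>{zs::'z list. length zs = n}. (\<Sum>xs\<in>{xs::'x list. length xs = n}. chain_prob PXZ Wc (zip xs zs) powr (1 - s)) powr (1 + s / (1 - s))) \<le> C2 * \<mu>2 ^ n)"
proof -
  define t where "t = 1 - s"
  define p where "p = 1 + s / (1 - s)"
  have tpos: "t > 0" using s by (simp add: t_def)
  have p1: "p \<ge> 1" using s by (simp add: p_def)
  have tp: "t * p = 1" using s by (simp add: t_def p_def field_simps)
  have ps: "1 + p * s = p" using s by (simp add: p_def field_simps)
  have ts: "t + s = 1" by (simp add: t_def)
  define Wt where "Wt a b = Wc a b powr t" for a b
  define Pt where "Pt a = PXZ a powr t" for a
  define g where "g z z' = (\<Sum>x\<in>UNIV. Wt (x, z) (0, z'))" for z z'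
  define a where "a z = (\<Sum>x\<in>UNIV. Pt (x, z))" for z
  define G where "G z z' = g z z' powr p" for z z'
  define ap where "ap z = a z powr p" for z
  have Wtnn: "0 \<le> Wt i j" for i j by (simp add: Wt_def)
  have gnn: "0 \<le> g z z'" for z z' unfolding g_def by (intro sum_nonneg) (simp add: Wt_def)
  have Gnn: "0 \<le> G z z'" for z z' by (simp add: G_def)
  have apnn: "0 \<le> ap z" for z by (simp add: ap_def)
  have lump: "(\<Sum>x\<in>UNIV. Wt (x, z) (x1, z')) = g z z'" for z z' x1
  proof -
    have "\<forall>z z' x1 x2. (\<Sum>x\<in>UNIV. Wc (x, z) (x1, z') powr (1 - s)) = (\<Sum>x\<in>UNIV. Wc (x, z) (x2, z') powr (1 - s))"
      using spec[OF h, of s] s by simp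
    then show ?thesis unfolding g_def Wt_def t_def by blast
  qed
  have Gpos: "G z z' > 0" if wz: "WcZ Wc z z' > 0" for z z'
  proof -
    obtain x where x: "Wc (x, z) (0, z') > 0"
      using wz sum_pos_ex[of UNIV "\<lambda>x. Wc (x, z) (0, z')"] tm_nonneg[OF tm] unfolding WcZ_def by auto
    have "0 < Wt (x, z) (0, z')" using x by (simp add: Wt_def)
    also have "\<dots> \<le> g z z'" unfolding g_def by (rule member_le_sum[of x UNIV "\<lambda>x. Wt (x, z) (0, z')"]) (auto intro: Wtnn)
    finally show ?thesis by (simp add: G_def)
  qed
  have irrG: "irreducible_mat G"
    by (rule proj_irred[OF irr tm_nonneg[OF tm] Gnn]) (use supp_WcZ[OF tm a2] Gpos in blast)
  obtain \<mu> w where mw: "\<mu> > 0" "\<And>i. w i > 0" "\<And>j. (\<Sum>i\<in>UNIV. w i * G i j) = \<mu> * w j"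
    using perron_left[OF Gnn irrG] by blast
  obtain c where c: "c > 0" "\<And>i. c \<le> w i" using min_pos[of w] mw(2) by blast
  define D where "D = (\<Sum>z\<in>UNIV. ap z * w z) / c"
  have Dnn: "D \<ge> 0" unfolding D_def using c apnn mw(2) by (intro divide_nonneg_pos sum_nonneg mult_nonneg_nonneg) (auto intro: less_imp_le)
  define C2 where "C2 = (D + 1) / \<mu>"
  have C2pos: "C2 > 0" unfolding C2_def using Dnn mw(1) by simp
  have bound: "(\<Sum>zs\<in>{zs::'z list. length zs = n}. (\<Sum>xs\<in>{xs::'x list. length xs = n}. chain_prob PXZ Wc (zip xs zs) powr (1 - s)) powr p) \<le> C2 * \<mu> ^ n"
    if n: "n \<ge> 1" for n
  proof -
    obtain n' where n': "n = Suc n'" using n by (cases n) auto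
    have "(\<Sum>zs\<in>{zs::'z list. length zs = n}. (\<Sum>xs\<in>{xs::'x list. length xs = n}. chain_prob PXZ Wc (zip xs zs) powr (1 - s)) powr p)
        = (\<Sum>zs\<in>{zs::'z list. length zs = Suc n'}. chain_prob ap G zs)"
    proof (unfold n', rule sum.cong[OF refl])
      fix zs assume "zs \<in> {zs::'z list. length zs = Suc n'}"
      then have l: "length zs = Suc n'" by simp
      have "(\<Sum>xs\<in>{xs::'x list. length xs = Suc n'}. chain_prob PXZ Wc (zip xs zs) powr (1 - s))
         = (\<Sum>xs\<in>{xs::'x list. length xs = Suc n'}. chain_prob Pt Wt (zip xs zs))"
        by (simp add: chain_prob_powr Pt_def[abs_def] Wt_def[abs_def] t_def)
      also have "\<dots> = chain_prob a g zs" unfolding a_def[abs_def] by (rule lump_chain[of Wt g, OF lump l])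
      finally show "(\<Sum>xs\<in>{xs::'x list. length xs = Suc n'}. chain_prob PXZ Wc (zip xs zs) powr (1 - s)) powr p = chain_prob ap G zs"
        by (simp add: chain_prob_powr ap_def[abs_def] G_def[abs_def])
    qed
    also have "\<dots> \<le> \<mu> ^ n' * D" unfolding D_def
      by (rule chain_sum_bound[OF Gnn apnn c(2) c(1) mw(3)]) (use mw(1) in simp)
    also have "\<dots> \<le> \<mu> ^ n' * (D + 1)" using mw(1) by simp
    also have "\<dots> = C2 * \<mu> ^ n" unfolding C2_def n' using mw(1) by simp
    finally show ?thesis .
  qed
  define V0 where "V0 z z' = G z z' * w z / (\<mu> * w z')" for z z'
  have V0nn: "0 \<le> V0 z z'" for z z' unfolding V0_def using Gnn mw(1,2) by (intro divide_nonneg_pos mult_nonneg_nonneg) (auto intro: less_imp_le)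
  have adm: "admissible_V Wc V0"
    unfolding admissible_V_def transition_matrix_def
  proof (intro conjI allI impI)
    fix z z' show "0 \<le> V0 z z'" by (rule V0nn)
  next
    fix z'
    have "(\<Sum>z\<in>UNIV. V0 z z') = (\<Sum>z\<in>UNIV. w z * G z z') / (\<mu> * w z')"
      unfolding V0_def by (simp add: sum_divide_distrib mult_ac)
    also have "\<dots> = 1" using mw(1) mw(2)[of z'] by (simp add: mw(3))
    finally show "(\<Sum>z\<in>UNIV. V0 z z') = 1" .
  next
    fix z z' assume "0 < WcZ Wc z z'"
    then show "0 < V0 z z'" unfolding V0_def using Gpos mw(1,2) by simp
  qed
  define y where "y i = w (snd i) powr t" for i :: "'x \<times> 'z"
  have ypos: "y i > 0" for i using mw(2)[of "snd i"] by (simp add: y_def)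
  have yeig: "(\<Sum>i\<in>UNIV. y i * MV Wc V0 s i j) = \<mu> powr t * y j" for j
  proof -
    obtain x' z' where j: "j = (x', z')" by (cases j)
    have tmz: "w z powr t * V0 z z' powr s * g z z' = w z * G z z' / (\<mu> powr s * w z' powr s)" for z
    proof -
      have "V0 z z' powr s = G z z' powr s * w z powr s / (\<mu> powr s * w z' powr s)"
        unfolding V0_def using Gnn mw(1,2) by (simp add: powr_divide powr_mult less_imp_le)
      moreover have "G z z' powr s * g z z' = G z z'"
      proof -
        have "G z z' powr s * g z z' = g z z' * g z z' powr (p * s)" by (simp add: G_def powr_powr)
        also have "\<dots> = g z z' powr (1 + p * s)" using gnn by (simp add: powr_mult_base)
        finally show ?thesis using ps by (simp add: G_def)
      qed
      moreover have "w z powr t * w z powr s = w z"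
      proof -
        have "w z powr t * w z powr s = w z powr (t + s)" by (simp add: powr_add)
        then show ?thesis using ts mw(2)[of z] by simp
      qed
      ultimately show ?thesis by (simp add: field_simps) (metis mult.commute mult.left_commute)
    qed
    have "(\<Sum>i\<in>UNIV. y i * MV Wc V0 s i j) = (\<Sum>x\<in>UNIV. \<Sum>z\<in>UNIV. w z powr t * (Wt (x, z) (x', z') * V0 z z' powr s))"
      unfolding j sum_pair_UNIV by (simp add: y_def MV_apply Wt_def t_def)
    also have "\<dots> = (\<Sum>z\<in>UNIV. \<Sum>x\<in>UNIV. w z powr t * (Wt (x, z) (x', z') * V0 z z' powr s))" by (rule sum.swap)
    also have "\<dots> = (\<Sum>z\<in>UNIV. w z powr t * V0 z z' powr s * (\<Sum>x\<in>UNIV. Wt (x, z) (x', z')))"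
      by (simp add: sum_distrib_left mult_ac)
    also have "\<dots> = (\<Sum>z\<in>UNIV. w z * G z z' / (\<mu> powr s * w z' powr s))" by (simp add: lump tmz)
    also have "\<dots> = \<mu> * w z' / (\<mu> powr s * w z' powr s)" by (simp add: sum_divide_distrib[symmetric] mw(3))
    also have "\<dots> = \<mu> powr t * w z' powr t"
    proof -
      have "\<mu> / \<mu> powr s = \<mu> powr t" using mw(1) by (simp add: t_def powr_diff)
      moreover have "w z' / w z' powr s = w z' powr t" using mw(2)[of z'] by (simp add: t_def powr_diff)
      ultimately show ?thesis by (metis times_divide_times_eq)
    qed
    finally show ?thesis by (simp add: j y_def)
  qed
  have "\<mu> powr t \<le> pf_eig (MV Wc V0 s)"
    by (rule left_eig_le_pf[OF MV_nonneg MV_irred[OF tm a2 irr adm] ypos yeig])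
  then have "ln (\<mu> powr t) \<le> s * H_cond_up Wc s"
    by (intro H_up_ge[OF tm a2 irr adm]) (use mw(1) s in auto)
  then have "(1 - s) * ln \<mu> \<le> s * H_cond_up Wc s" by (simp add: ln_powr t_def)
  then show ?thesis using C2pos mw(1) bound unfolding p_def by blast
qed


lemma src_bound:
  fixes PM :: "'m::finite \<Rightarrow> real" and Ws :: "'m \<Rightarrow> 'm \<Rightarrow> real"
  assumes pd: "prob_dist PM" and tm: "transition_matrix Ws" and irr: "irreducible_mat Ws" and s: "0 < s" "s < 1"
  shows "\<exists>C1>0. \<exists>\<mu>1>0. ln \<mu>1 \<le> theta_H_src Ws s \<and>
    (\<forall>k. (\<Sum>ms\<in>{ms::'m list. length ms = k}. chain_prob PM Ws ms powr (1 - s)) \<le> C1 * \<mu>1 ^ k)"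
proof -
  define t where "t = 1 - s"
  have tpos: "t > 0" using s by (simp add: t_def)
  define A where "A a b = Ws a b powr t" for a b
  define Pt where "Pt a = PM a powr t" for a
  have Ann: "0 \<le> A a b" for a b by (simp add: A_def)
  have Ptnn: "0 \<le> Pt a" for a by (simp add: Pt_def)
  have irrA: "irreducible_mat A" unfolding A_def by (rule tm_irr_powr[OF tm irr tpos])
  obtain \<mu> w where mw: "\<mu> > 0" "\<And>i. w i > 0" "\<And>j. (\<Sum>i\<in>UNIV. w i * A i j) = \<mu> * w j" "\<mu> \<le> pf_eig A"
    using perron_left[OF Ann irrA] by blast
  obtain c where c: "c > 0" "\<And>i. c \<le> w i" using min_pos[of w] mw(2) by blast
  define D where "D = (\<Sum>x\<in>UNIV. Pt x * w x) / c"
  have Dnn: "D \<ge> 0" unfolding D_def using c Ptnn mw(2) by (intro divide_nonneg_pos sum_nonneg mult_nonneg_nonneg) (auto intro: less_imp_le)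
  define C1 where "C1 = 1 + D / \<mu>"
  have C1pos: "C1 > 0" unfolding C1_def using Dnn mw(1) by (simp add: add_pos_nonneg)
  have bound: "(\<Sum>ms\<in>{ms::'m list. length ms = k}. chain_prob PM Ws ms powr (1 - s)) \<le> C1 * \<mu> ^ k" for k
  proof (cases k)
    case 0
    have "1 \<le> C1" unfolding C1_def using Dnn mw(1) by simp
    then show ?thesis using 0 by (simp add: len0)
  next
    case (Suc k')
    have "(\<Sum>ms\<in>{ms::'m list. length ms = k}. chain_prob PM Ws ms powr (1 - s))
        = (\<Sum>ms\<in>{ms::'m list. length ms = Suc k'}. chain_prob Pt A ms)"
      unfolding Suc by (simp add: chain_prob_powr Pt_def[abs_def] A_def[abs_def] t_def)
    also have "\<dots> \<le> \<mu> ^ k' * D" unfolding D_def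
      by (rule chain_sum_bound[OF Ann Ptnn c(2) c(1) mw(3)]) (use mw(1) in simp)
    also have "\<dots> = (D / \<mu>) * \<mu> ^ k" unfolding Suc using mw(1) by simp
    also have "\<dots> \<le> C1 * \<mu> ^ k" unfolding C1_def using mw(1) by (intro mult_right_mono) auto
    finally show ?thesis .
  qed
  have "ln \<mu> \<le> theta_H_src Ws s"
    unfolding theta_H_src_def using mw(1) mw(4) by (simp add: A_def[abs_def] t_def)
  then show ?thesis using C1pos mw(1) bound by blast
qed

lemma chan_bound:
  fixes PXZ :: "'x::{finite,ab_group_add} \<times> 'z::finite \<Rightarrow> real"
    and Wc :: "'x \<times> 'z \<Rightarrow> 'x \<times> 'z \<Rightarrow> real"
  assumes pd: "prob_dist PXZ" and tm: "transition_matrix Wc" and irr: "irreducible_mat Wc"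
    and a2: "assumption2 Wc" and s: "0 < s" "s \<le> 1/2"
  shows "\<exists>C2>0. \<exists>\<mu>2>0. (1 - s) * ln \<mu>2 \<le> s * H_cond_up Wc s \<and>
    (\<forall>n\<ge>1. (\<Sum>zs\<in>{zs::'z list. length zs = n}. (\<Sum>xs\<in>{xs::'x list. length xs = n}. chain_prob PXZ Wc (zip xs zs) powr (1 - s)) powr (1 + s / (1 - s))) \<le> C2 * \<mu>2 ^ n)"
proof (cases "CARD('z) = 1")
  case True
  show ?thesis by (rule chan_ii[OF pd tm irr a2 True s])
next
  case False
  then have h: "\<forall>\<theta>::real. \<theta> < 1 \<longrightarrow> (\<forall>z z' x1 x2.
         (\<Sum>x\<in>UNIV. Wc (x, z) (x1, z') powr (1 - \<theta>)) = (\<Sum>x\<in>UNIV. Wc (x, z) (x2, z') powr (1 - \<theta>)))"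
    using a2 unfolding assumption2_def by blast
  show ?thesis by (rule chan_i[OF pd tm irr a2 h s])
qed


lemma floor_ratio_tendsto:
  assumes r: "r > 0"
  shows "(\<lambda>n. real (nat \<lfloor>r * real n\<rfloor>) / real n) \<longlonglongrightarrow> r"
proof (rule tendsto_sandwich[of "\<lambda>n. r - 1 / real n" _ _ "\<lambda>n. r"])
  show "\<forall>\<^sub>F n in sequentially. r - 1 / real n \<le> real (nat \<lfloor>r * real n\<rfloor>) / real n"
    using eventually_gt_at_top[of 0]
  proof eventually_elim
    case (elim n)
    have "real (nat \<lfloor>r * real n\<rfloor>) = real_of_int \<lfloor>r * real n\<rfloor>" using r by simp
    moreover have "r * real n - 1 \<le> real_of_int \<lfloor>r * real n\<rfloor>" by linarith
    ultimately have "r * real n - 1 \<le> real (nat \<lfloor>r * real n\<rfloor>)" by simp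
    then have "(r * real n - 1) / real n \<le> real (nat \<lfloor>r * real n\<rfloor>) / real n"
      using elim by (intro divide_right_mono) auto
    moreover have "(r * real n - 1) / real n = r - 1 / real n" using elim by (simp add: field_simps)
    ultimately show ?case by simp
  qed
  show "\<forall>\<^sub>F n in sequentially. real (nat \<lfloor>r * real n\<rfloor>) / real n \<le> r"
    using eventually_gt_at_top[of 0]
  proof eventually_elim
    case (elim n)
    have "real (nat \<lfloor>r * real n\<rfloor>) = real_of_int \<lfloor>r * real n\<rfloor>" using r by simp
    moreover have "real_of_int \<lfloor>r * real n\<rfloor> \<le> r * real n" by linarith
    ultimately show ?case using elim by (simp add: field_simps)
  qed
  show "(\<lambda>n. r - 1 / real n) \<longlonglongrightarrow> r"
    using tendsto_diff[OF tendsto_const lim_const_over_n[of 1]] by simp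
qed simp


lemma per_s:
  fixes PM :: "'m::finite \<Rightarrow> real" and Ws :: "'m \<Rightarrow> 'm \<Rightarrow> real"
    and PXZ :: "'x::{finite,ab_group_add} \<times> 'z::finite \<Rightarrow> real"
    and Wc :: "'x \<times> 'z \<Rightarrow> 'x \<times> 'z \<Rightarrow> real"
    and r :: real
  assumes pdM: "prob_dist PM" and tmS: "transition_matrix Ws" and irrS: "irreducible_mat Ws"
    and pdX: "prob_dist PXZ" and tmC: "transition_matrix Wc" and irrC: "irreducible_mat Wc"
    and a2: "assumption2 Wc" and r: "r > 0" and s: "0 < s" "s \<le> 1/2"
  shows "ereal ((s * ln (real CARD('x)) - U_up Ws Wc r s) / (1 - s))
    \<le> liminf (\<lambda>n. if Pj PM Ws PXZ Wc (nat \<lfloor>r * real n\<rfloor>) n = 0 then \<infinity>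
                     else ereal (- ln (Pj PM Ws PXZ Wc (nat \<lfloor>r * real n\<rfloor>) n) / real n))"
proof -
  define \<rho> where "\<rho> = s / (1 - s)"
  define p where "p = 1 + \<rho>"
  define R where "R = ln (real CARD('x))"
  have rho: "0 < \<rho>" "\<rho> \<le> 1" using s by (auto simp: \<rho>_def field_simps)
  have tp: "(1 - s) * (1 + \<rho>) = 1" using s by (simp add: \<rho>_def field_simps)
  obtain C1 \<mu>1 where src: "C1 > 0" "\<mu>1 > 0" "ln \<mu>1 \<le> theta_H_src Ws s"
    "\<And>k. (\<Sum>ms\<in>{ms::'m list. length ms = k}. chain_prob PM Ws ms powr (1 - s)) \<le> C1 * \<mu>1 ^ k"
    using src_bound[OF pdM tmS irrS, of s] s by auto
  obtain C2 \<mu>2 where chan: "C2 > 0" "\<mu>2 > 0" "(1 - s) * ln \<mu>2 \<le> s * H_cond_up Wc s"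
    "\<And>n. n \<ge> 1 \<Longrightarrow> (\<Sum>zs\<in>{zs::'z list. length zs = n}. (\<Sum>xs\<in>{xs::'x list. length xs = n}. chain_prob PXZ Wc (zip xs zs) powr (1 - s)) powr (1 + s / (1 - s))) \<le> C2 * \<mu>2 ^ n"
    using chan_bound[OF pdX tmC irrC a2 s] by blast
  define k where "k n = nat \<lfloor>r * real n\<rfloor>" for n :: nat
  define N where "N n = real (card {xs::'x list. length xs = n})" for n
  have Neq: "N n = real CARD('x) ^ n" for n
    unfolding N_def using card_lists_length_eq[of "UNIV::'x set" n] by simp
  have cardX: "real CARD('x) > 0" by simp
  have Npos: "N n > 0" for n unfolding Neq using cardX by simp
  define U1 where "U1 n = C1 * \<mu>1 ^ k n" for n
  have U1pos: "U1 n > 0" for n unfolding U1_def using src by simp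
  define B where "B n = U1 n * (U1 n / N n) powr \<rho> * (C2 * \<mu>2 ^ n)" for n
  have Bpos: "B n > 0" for n unfolding B_def using U1pos[of n] Npos[of n] chan(1,2) by (intro mult_pos_pos) auto
  have nnM: "\<And>a. 0 \<le> PM a" using pdM by (simp add: prob_dist_def)
  have nnS: "\<And>a b. 0 \<le> Ws a b" using tmS by (simp add: transition_matrix_def)
  have nnX: "\<And>a. 0 \<le> PXZ a" using pdX unfolding prob_dist_def by blast
  have nnC: "\<And>a b. 0 \<le> Wc a b" using tmC unfolding transition_matrix_def by blast
  have PjB: "Pj PM Ws PXZ Wc (k n) n \<le> B n" if n: "n \<ge> 1" for n
  proof -
    define S where "S = (\<Sum>ms\<in>{ms::'m list. length ms = k n}. chain_prob PM Ws ms powr (1 - s))"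
    define Ach where "Ach zs = (\<Sum>xs\<in>{xs::'x list. length xs = n}. chain_prob PXZ Wc (zip xs zs) powr (1 - s))" for zs
    have Snn: "S \<ge> 0" unfolding S_def by (intro sum_nonneg) auto
    have Achnn: "Ach zs \<ge> 0" for zs unfolding Ach_def by (intro sum_nonneg) auto
    have "Pj PM Ws PXZ Wc (k n) n \<le> S * (\<Sum>zs\<in>{zs::'z list. length zs = n}. Ach zs * (S * Ach zs / N n) powr \<rho>)"
      using Pj_bound[OF nnM nnS nnX nnC rho tp, where k="k n" and n=n] unfolding S_def Ach_def N_def .
    also have "(\<Sum>zs\<in>{zs::'z list. length zs = n}. Ach zs * (S * Ach zs / N n) powr \<rho>)
        = (S / N n) powr \<rho> * (\<Sum>zs\<in>{zs::'z list. length zs = n}. Ach zs powr p)"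
    proof -
      have "Ach zs * (S * Ach zs / N n) powr \<rho> = (S / N n) powr \<rho> * Ach zs powr p" for zs
      proof -
        have "(S * Ach zs / N n) = (S / N n) * Ach zs" by simp
        then have "(S * Ach zs / N n) powr \<rho> = (S / N n) powr \<rho> * Ach zs powr \<rho>"
          by (simp only: powr_mult)
        then have "Ach zs * (S * Ach zs / N n) powr \<rho> = (S / N n) powr \<rho> * (Ach zs * Ach zs powr \<rho>)"
          by (simp only: mult_ac)
        also have "Ach zs * Ach zs powr \<rho> = Ach zs powr p" unfolding p_def using Achnn by (simp add: powr_mult_base)
        finally show ?thesis .
      qed
      then show ?thesis by (simp add: sum_distrib_left)
    qed
    also have "S * ((S / N n) powr \<rho> * (\<Sum>zs\<in>{zs::'z list. length zs = n}. Ach zs powr p)) \<le> U1 n * ((U1 n / N n) powr \<rho> * (C2 * \<mu>2 ^ n))"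
    proof -
      have SU: "S \<le> U1 n" unfolding S_def U1_def by (rule src(4))
      have "(S / N n) powr \<rho> \<le> (U1 n / N n) powr \<rho>"
        using SU Snn Npos[of n] rho by (intro powr_mono2 divide_right_mono) (auto intro: less_imp_le)
      moreover have "(\<Sum>zs\<in>{zs::'z list. length zs = n}. Ach zs powr p) \<le> C2 * \<mu>2 ^ n"
        using chan(4)[OF n] unfolding Ach_def p_def \<rho>_def .
      ultimately show ?thesis using SU Snn by (intro mult_mono) (auto intro!: sum_nonneg mult_nonneg_nonneg)
    qed
    finally show ?thesis by (simp add: B_def mult.assoc)
  qed
  define g where "g n = \<rho> * R - p * ln C1 / real n - p * (real (k n) / real n) * ln \<mu>1 - ln C2 / real n - ln \<mu>2" for n
  have lnB: "- ln (B n) / real n = g n" if n: "n \<ge> 1" for n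
  proof -
    have lnU: "ln (U1 n) = ln C1 + real (k n) * ln \<mu>1" unfolding U1_def using src by (simp add: ln_mult ln_realpow)
    have lnN: "ln (N n) = real n * R" unfolding Neq R_def using cardX by (simp add: ln_realpow)
    have "ln (B n) = ln (U1 n) + \<rho> * (ln (U1 n) - ln (N n)) + (ln C2 + real n * ln \<mu>2)"
      unfolding B_def using U1pos[of n] Npos[of n] chan(1,2)
      by (simp add: ln_mult ln_powr ln_div ln_realpow)
    then have "ln (B n) = p * (ln C1 + real (k n) * ln \<mu>1) - \<rho> * real n * R + ln C2 + real n * ln \<mu>2"
      unfolding lnU lnN p_def by (simp add: algebra_simps)
    moreover have "g n * real n = \<rho> * R * real n - p * ln C1 - p * real (k n) * ln \<mu>1 - ln C2 - real n * ln \<mu>2"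
      using n unfolding g_def by (simp add: field_simps)
    ultimately have "- ln (B n) = g n * real n" by (simp add: algebra_simps)
    then show ?thesis using n by (simp add: divide_eq_eq)
  qed
  define L where "L = \<rho> * R - p * r * ln \<mu>1 - ln \<mu>2"
  have glim: "g \<longlonglongrightarrow> L"
  proof -
    have kr: "(\<lambda>n. real (k n) / real n) \<longlonglongrightarrow> r" unfolding k_def by (rule floor_ratio_tendsto[OF r])
    have "(\<lambda>n. \<rho> * R - p * (ln C1 / real n) - p * (real (k n) / real n) * ln \<mu>1 - ln C2 / real n - ln \<mu>2)
        \<longlonglongrightarrow> \<rho> * R - p * 0 - p * r * ln \<mu>1 - 0 - ln \<mu>2"
      by (intro tendsto_intros kr lim_const_over_n)
    then show ?thesis unfolding g_def[abs_def] L_def by simp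
  qed
  have ev: "\<forall>\<^sub>F n in sequentially. ereal (g n) \<le> (if Pj PM Ws PXZ Wc (nat \<lfloor>r * real n\<rfloor>) n = 0 then \<infinity>
                     else ereal (- ln (Pj PM Ws PXZ Wc (nat \<lfloor>r * real n\<rfloor>) n) / real n))"
    using eventually_ge_at_top[of 1]
  proof eventually_elim
    case (elim n)
    show ?case
    proof (cases "Pj PM Ws PXZ Wc (nat \<lfloor>r * real n\<rfloor>) n = 0")
      case True then show ?thesis by simp
    next
      case False
      have "0 \<le> Pj PM Ws PXZ Wc (nat \<lfloor>r * real n\<rfloor>) n" by (rule Pj_nonneg[OF nnM nnS nnX nnC])
      with False have pos: "0 < Pj PM Ws PXZ Wc (nat \<lfloor>r * real n\<rfloor>) n" by simp
      have "Pj PM Ws PXZ Wc (nat \<lfloor>r * real n\<rfloor>) n \<le> B n" using PjB[OF elim] by (simp add: k_def)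
      then have "ln (Pj PM Ws PXZ Wc (nat \<lfloor>r * real n\<rfloor>) n) \<le> ln (B n)" using pos by simp
      then have "- ln (B n) / real n \<le> - ln (Pj PM Ws PXZ Wc (nat \<lfloor>r * real n\<rfloor>) n) / real n"
        using elim by (intro divide_right_mono) auto
      then show ?thesis using False lnB[OF elim] by simp
    qed
  qed
  have "liminf (\<lambda>n. ereal (g n)) = ereal L"
    by (rule lim_imp_Liminf) (auto intro: tendsto_ereal glim)
  then have limle: "ereal L \<le> liminf (\<lambda>n. if Pj PM Ws PXZ Wc (nat \<lfloor>r * real n\<rfloor>) n = 0 then \<infinity>
                     else ereal (- ln (Pj PM Ws PXZ Wc (nat \<lfloor>r * real n\<rfloor>) n) / real n))"
    using Liminf_mono[OF ev] by simp
  have "(s * ln (real CARD('x)) - U_up Ws Wc r s) / (1 - s) \<le> L"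
  proof -
    have "r * ln \<mu>1 \<le> r * theta_H_src Ws s" using src(3) r by simp
    then have num: "s * R - U_up Ws Wc r s \<le> s * R - r * ln \<mu>1 - (1 - s) * ln \<mu>2"
      unfolding U_up_def using chan(3) by simp
    have s1: "1 - s \<noteq> 0" using s by simp
    have pe: "p = 1 / (1 - s)" unfolding p_def \<rho>_def using s1 by (simp add: field_simps)
    have e1: "(s * R - r * ln \<mu>1 - (1 - s) * ln \<mu>2) / (1 - s) = s * R / (1 - s) - r * ln \<mu>1 / (1 - s) - ln \<mu>2"
      using s1 by (simp add: diff_divide_distrib)
    have "L = (s * R - r * ln \<mu>1 - (1 - s) * ln \<mu>2) / (1 - s)"
      unfolding e1 L_def pe \<rho>_def by simp
    then show ?thesis using num s unfolding R_def by (simp add: divide_right_mono)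
  qed
  then show ?thesis using limle by (meson ereal_less_eq(3) order_trans)
qed


theorem mainTheorem14:
  fixes PM :: "'m::finite \<Rightarrow> real" and Ws :: "'m \<Rightarrow> 'm \<Rightarrow> real"
    and PXZ :: "'x::{finite,ab_group_add} \<times> 'z::finite \<Rightarrow> real"
    and Wc :: "'x \<times> 'z \<Rightarrow> 'x \<times> 'z \<Rightarrow> real"
    and r :: real
  assumes "prob_dist PM" "transition_matrix Ws" "irreducible_mat Ws" "aperiodic_mat Ws"
    and "prob_dist PXZ" "transition_matrix Wc" "irreducible_mat Wc" "aperiodic_mat Wc"
    and "assumption2 Wc"
    and "r > 0"
    and "r * H_src_rate Ws + H_cond_rate Wc < ln (real CARD('x))"
  shows "liminf (\<lambda>n. if Pj PM Ws PXZ Wc (nat \<lfloor>r * real n\<rfloor>) n = 0 then \<infinity>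
                     else ereal (- ln (Pj PM Ws PXZ Wc (nat \<lfloor>r * real n\<rfloor>) n) / real n))
         \<ge> (SUP s\<in>{0<..1/2}. ereal ((s * ln (real CARD('x)) - U_up Ws Wc r s) / (1 - s)))"
proof (rule SUP_least)
  fix s :: real assume "s \<in> {0<..1/2}"
  then have s: "0 < s" "s \<le> 1/2" by auto
  show "ereal ((s * ln (real CARD('x)) - U_up Ws Wc r s) / (1 - s))
    \<le> liminf (\<lambda>n. if Pj PM Ws PXZ Wc (nat \<lfloor>r * real n\<rfloor>) n = 0 then \<infinity>
                     else ereal (- ln (Pj PM Ws PXZ Wc (nat \<lfloor>r * real n\<rfloor>) n) / real n))"
    by (rule per_s[OF assms(1,2,3,5,6,7,9,10) s])
qed

end
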